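(* Let $X$ be a connected simple graph with countable vertex set, bounded degree and no vertex of degree one; let $M=\sup_{x\in VX}\deg(x)$, $\alpha=\frac{M+\sqrt{M^2+4M}}{2}$, $f(z)=A_Xz-Q_Xz^2$. For $x_0,x\in VX$ define $Z_X(u,x_0,x)=\exp\Big(\sum_{m=1}^\infty\frac{N_{X,m}(x_0,x)}{m}u^m\Big)$. Then for $|u|<1/\alpha$, $$Z_X(u,x_0,x)=(1-u^2)^{-\frac{\deg(x_0)-2}{2}\delta_{x_0}(x)}\times\exp\big(-[\log(I-(D_X-\Delta_X)u+(D_X-I)u^2)](x_0,x)\big)$$ $$\times\exp\Big(\int_0^u z^2\sum_{n=1}^\infty\frac1n\sum_{j=1}^{n-1}j\big[f(z)^{n-1-j}[A_X,D_X]f(z)^{j-1}\big](x_0,x)\,dz\Big)\times\exp\Big(\sum_{m=3}^\infty\frac{R_m(x_0,x)}{m}u^m\Big).$$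
   Context: A graph $X=(VX,EX)$ has maps $e\mapsto(o(e),t(e))$, $e\mapsto\bar e$ with $\bar e\ne e$, $\bar{\bar e}=e$, $o(e)=t(\bar e)$; simple means no loops and no multiple edges. $E_x=\{e:o(e)=x\}$, $\deg(x)=|E_x|$. A path $c=(e_1,\dots,e_n)$ ($t(e_i)=o(e_{i+1})$, $o(c)=o(e_1)$, $t(c)=t(e_n)$, length $n$; a vertex is a path of length 0) is geodesic if $e_{i+1}\ne\bar e_i$ for all $i$; a geodesic loop is a closed geodesic path. Operators on $\ell^2(VX)$: $(A_Xf)(x)=\sum_{e\in E_x}f(t(e))$, $(D_Xf)(x)=\deg(x)f(x)$, $\Delta_X=D_X-A_X$, $Q_X=D_X-I$, $[A_X,D_X]=A_XD_X-D_XA_X$; $(C_mf)(x)=\sum f(t(c))$ over geodesic paths $c$ of length $m$ with $o(c)=x$. $B_m=C_m$ for $m\le2$, $B_m=C_m-(Q_X-I)\sum_{j=1}^{\lfloor m/2\rfloor}C_{m-2j}$ for $m\ge3$. With $c_k(x)$ the number of geodesic loops of length $k$ at $x$ and $(\Delta_Xc_k)(x)=\deg(x)c_k(x)-\sum_{e\in E_x}c_k(t(e))$: $R_m=0$ for $m\le2$ and for $m\ge3$ $R_m$ is multiplication by $x\mapsto\sum_{j=1}^{\lceil m/2\rceil-1}j(\Delta_Xc_{m-2j})(x)$; $R_m^+=0$ for $m\le2$, $R_m^+=(Q_X-I)\delta_{2\mathbb Z}(m)+R_m$ for $m\ge3$ ($\delta_{2\mathbb Z}(m)=1$ if $m$ even,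 else $0$); $N_{X,m}=B_m+R_m^+$. For a bounded operator $B$, $B(x_0,x)=(B\delta_{x_0})(x)$ where $\delta_{x_0}$ is the indicator of $x_0$. $\log(I-g)=-\sum_{n\ge1}g^n/n$ for $\|g\|<1$ (here $g=f(u)$, which has norm $<1$ for $|u|<1/\alpha$). *)

theory Defs
  imports "HOL-Complex_Analysis.Complex_Analysis" "HOL-Library.Countable"
begin

text \<open>Operators are locally finite linear maps on functions 'v => complex;
on indicator functions they agree with the bounded operators on l2(VX).\<close>

type_synonym 'v op = "('v \<Rightarrow> complex) \<Rightarrow> 'v \<Rightarrow> complex"

definition nbrs :: "('v \<Rightarrow> 'v \<Rightarrow> bool) \<Rightarrow> 'v \<Rightarrow> 'v set" where
  "nbrs adj x = {y. adj x y}"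

definition deg :: "('v \<Rightarrow> 'v \<Rightarrow> bool) \<Rightarrow> 'v \<Rightarrow> nat" where
  "deg adj x = card (nbrs adj x)"

definition simple_graph :: "('v \<Rightarrow> 'v \<Rightarrow> bool) \<Rightarrow> bool" where
  "simple_graph adj \<longleftrightarrow> (\<forall>x y. adj x y \<longrightarrow> adj y x) \<and> (\<forall>x. \<not> adj x x)"

definition connected_graph :: "('v \<Rightarrow> 'v \<Rightarrow> bool) \<Rightarrow> bool" where
  "connected_graph adj \<longleftrightarrow> (\<forall>x y. adj\<^sup>*\<^sup>* x y)"

definition bounded_degree :: "('v \<Rightarrow> 'v \<Rightarrow> bool) \<Rightarrow> bool" where
  "bounded_degree adj \<longleftrightarrow> (\<exists>K. \<forall>x. finite (nbrs adj x) \<and> deg adj x \<le> K)"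

definition max_deg :: "('v \<Rightarrow> 'v \<Rightarrow> bool) \<Rightarrow> nat" where
  "max_deg adj = (SUP x. deg adj x)"

definition alpha :: "('v \<Rightarrow> 'v \<Rightarrow> bool) \<Rightarrow> real" where
  "alpha adj = (let M = real (max_deg adj) in (M + sqrt (M\<^sup>2 + 4 * M)) / 2)"

definition delta :: "'v \<Rightarrow> 'v \<Rightarrow> complex" where
  "delta x0 = (\<lambda>y. if y = x0 then 1 else 0)"

definition kernel :: "'v op \<Rightarrow> 'v \<Rightarrow> 'v \<Rightarrow> complex" where
  "kernel B x0 x = B (delta x0) x"

definition A_op :: "('v \<Rightarrow> 'v \<Rightarrow> bool) \<Rightarrow> 'v op" where
  "A_op adj g x = (\<Sum>y\<in>nbrs adj x. g y)"

definition D_op :: "('v \<Rightarrow> 'v \<Rightarrow> bool) \<Rightarrow> 'v op" where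
  "D_op adj g x = of_nat (deg adj x) * g x"

definition Delta_op :: "('v \<Rightarrow> 'v \<Rightarrow> bool) \<Rightarrow> 'v op" where
  "Delta_op adj g x = D_op adj g x - A_op adj g x"

definition Q_op :: "('v \<Rightarrow> 'v \<Rightarrow> bool) \<Rightarrow> 'v op" where
  "Q_op adj g x = D_op adj g x - g x"

definition comm_AD :: "('v \<Rightarrow> 'v \<Rightarrow> bool) \<Rightarrow> 'v op" where
  "comm_AD adj g = (\<lambda>x. A_op adj (D_op adj g) x - D_op adj (A_op adj g) x)"

text \<open>Geodesic paths of length m starting at x, as vertex sequences (simple graph:
an edge is an ordered adjacent pair; e_{i+1} \<noteq> reverse e_i iff no immediate backtracking).\<close>
definition geopaths :: "('v \<Rightarrow> 'v \<Rightarrow> bool) \<Rightarrow> nat \<Rightarrow> 'v \<Rightarrow> 'v list set" where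
  "geopaths adj m x = {p. length p = Suc m \<and> p ! 0 = x
      \<and> (\<forall>i<m. adj (p ! i) (p ! Suc i))
      \<and> (\<forall>i. Suc (Suc i) \<le> m \<longrightarrow> p ! Suc (Suc i) \<noteq> p ! i)}"

definition C_op :: "('v \<Rightarrow> 'v \<Rightarrow> bool) \<Rightarrow> nat \<Rightarrow> 'v op" where
  "C_op adj m g x = (\<Sum>p\<in>geopaths adj m x. g (last p))"

definition B_op :: "('v \<Rightarrow> 'v \<Rightarrow> bool) \<Rightarrow> nat \<Rightarrow> 'v op" where
  "B_op adj m g x = (if m \<le> 2 then C_op adj m g x
     else C_op adj m g x - (Q_op adj (\<lambda>y. \<Sum>j=1..m div 2. C_op adj (m - 2*j) g y) x
                            - (\<Sum>j=1..m div 2. C_op adj (m - 2*j) g x)))"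

definition c_loops :: "('v \<Rightarrow> 'v \<Rightarrow> bool) \<Rightarrow> nat \<Rightarrow> 'v \<Rightarrow> complex" where
  "c_loops adj k x = of_nat (card {p\<in>geopaths adj k x. last p = x})"

definition R_op :: "('v \<Rightarrow> 'v \<Rightarrow> bool) \<Rightarrow> nat \<Rightarrow> 'v op" where
  "R_op adj m g x = (if m \<le> 2 then 0
     else (\<Sum>j=1..(m+1) div 2 - 1. of_nat j * Delta_op adj (c_loops adj (m - 2*j)) x) * g x)"

definition Rplus_op :: "('v \<Rightarrow> 'v \<Rightarrow> bool) \<Rightarrow> nat \<Rightarrow> 'v op" where
  "Rplus_op adj m g x = (if m \<le> 2 then 0
     else (if even m then Q_op adj g x - g x else 0) + R_op adj m g x)"

definition N_op :: "('v \<Rightarrow> 'v \<Rightarrow> bool) \<Rightarrow> nat \<Rightarrow> 'v op" where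
  "N_op adj m g x = B_op adj m g x + Rplus_op adj m g x"

definition f_op :: "('v \<Rightarrow> 'v \<Rightarrow> bool) \<Rightarrow> complex \<Rightarrow> 'v op" where
  "f_op adj z g x = A_op adj g x * z - Q_op adj g x * z\<^sup>2"

definition log_I_minus_kernel :: "'v op \<Rightarrow> 'v \<Rightarrow> 'v \<Rightarrow> complex" where
  "log_I_minus_kernel G x0 x = - (\<Sum>n. kernel (G ^^ Suc n) x0 x / of_nat (Suc n))"

definition Z_X :: "('v \<Rightarrow> 'v \<Rightarrow> bool) \<Rightarrow> complex \<Rightarrow> 'v \<Rightarrow> 'v \<Rightarrow> complex" where
  "Z_X adj u x0 x = exp (\<Sum>k. kernel (N_op adj (Suc k)) x0 x / of_nat (Suc k) * u ^ Suc k)"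

end

theory Submission imports Defs begin

definition lin :: "'v op \<Rightarrow> bool" where
  "lin F \<longleftrightarrow> (\<forall>h1 h2 x. F (\<lambda>y. h1 y + h2 y) x = F h1 x + F h2 x) \<and> (\<forall>c h x. F (\<lambda>y. c * h y) x = c * F h x)"

definition fd_op :: "('v \<Rightarrow> 'v \<Rightarrow> bool) \<Rightarrow> complex \<Rightarrow> 'v op" where
  "fd_op adj z g x = A_op adj g x - 2 * z * Q_op adj g x"

lemma lin_add: "lin F \<Longrightarrow> F (\<lambda>y. h1 y + h2 y) x = F h1 x + F h2 x"
  unfolding lin_def by blast
lemma lin_scale: "lin F \<Longrightarrow> F (\<lambda>y. c * h y) x = c * F h x"
  unfolding lin_def by blast
lemma lin_zero: "lin F \<Longrightarrow> F (\<lambda>y. 0) x = 0"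
  using lin_scale[of F 0 "\<lambda>y. 0" x] by simp
lemma lin_diff: "lin F \<Longrightarrow> F (\<lambda>y. h1 y - h2 y) x = F h1 x - F h2 x"
proof -
  assume l: "lin F"
  have "F (\<lambda>y. h1 y + (-1) * h2 y) x = F h1 x + (-1) * F h2 x"
    using lin_add[OF l, of h1 "\<lambda>y. (-1) * h2 y"] lin_scale[OF l, of "-1" h2] by simp
  then show ?thesis by simp
qed
lemma lin_sum: assumes l: "lin F" and "finite I" shows "F (\<lambda>y. \<Sum>i\<in>I. h i y) x = (\<Sum>i\<in>I. F (h i) x)"
  using assms(2)
proof (induction I rule: finite_induct)
  case empty then show ?case using lin_zero[OF l] by simp
next
  case (insert a I)
  then show ?case using lin_add[OF l, of "h a" "\<lambda>y. \<Sum>i\<in>I. h i y" x] by simp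
qed
lemma lin_ext: "lin F \<Longrightarrow> F (\<lambda>y. h1 y + h2 y) = (\<lambda>x. F h1 x + F h2 x)"
  by (rule ext) (rule lin_add)
lemma lin_comp: "lin F \<Longrightarrow> lin G \<Longrightarrow> lin (F \<circ> G)"
  unfolding lin_def comp_def
proof (intro conjI allI)
  fix h1 h2 x c h
  assume l: "(\<forall>h1 h2 x. F (\<lambda>y. h1 y + h2 y) x = F h1 x + F h2 x) \<and> (\<forall>c h x. F (\<lambda>y. c * h y) x = c * F h x)"
    "(\<forall>h1 h2 x. G (\<lambda>y. h1 y + h2 y) x = G h1 x + G h2 x) \<and> (\<forall>c h x. G (\<lambda>y. c * h y) x = c * G h x)"
  have "G (\<lambda>y. h1 y + h2 y) = (\<lambda>x. G h1 x + G h2 x)" using l(2) by auto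
  then show "F (G (\<lambda>y. h1 y + h2 y)) x = F (G h1) x + F (G h2) x" using l(1) by auto
  have "G (\<lambda>y. c * h y) = (\<lambda>x. c * G h x)" using l(2) by auto
  then show "F (G (\<lambda>y. c * h y)) x = c * F (G h) x" using l(1) by auto
qed
lemma lin_id: "lin (\<lambda>h. h)" unfolding lin_def by auto
lemma lin_pow: "lin F \<Longrightarrow> lin (F ^^ n)"
  by (induction n) (auto simp: lin_id[unfolded id_def[symmetric]] lin_comp)

lemma lin_A: "lin (A_op adj)"
  unfolding lin_def A_op_def by (auto simp: sum.distrib sum_distrib_left)
lemma lin_D: "lin (D_op adj)"
  unfolding lin_def D_op_def by (auto simp: algebra_simps)
lemma lin_Q: "lin (Q_op adj)"
  unfolding lin_def Q_op_def D_op_def by (auto simp: algebra_simps)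
lemma lin_f: "lin (f_op adj z)"
  unfolding lin_def f_op_def
  by (simp add: lin_add[OF lin_A] lin_add[OF lin_Q] lin_scale[OF lin_A] lin_scale[OF lin_Q] algebra_simps)
lemma lin_fd: "lin (fd_op adj z)"
  unfolding lin_def fd_op_def
  by (simp add: lin_add[OF lin_A] lin_add[OF lin_Q] lin_scale[OF lin_A] lin_scale[OF lin_Q] algebra_simps)
lemma lin_comm: "lin (comm_AD adj)"
proof -
  have "comm_AD adj = (\<lambda>g x. A_op adj (D_op adj g) x - D_op adj (A_op adj g) x)"
    by (simp add: comm_AD_def[abs_def])
  moreover have "lin (\<lambda>g x. A_op adj (D_op adj g) x - D_op adj (A_op adj g) x)"
    unfolding lin_def
  proof (intro conjI allI)
    fix h1 h2 x c h
    show "A_op adj (D_op adj (\<lambda>y. h1 y + h2 y)) x - D_op adj (A_op adj (\<lambda>y. h1 y + h2 y)) x =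
       A_op adj (D_op adj h1) x - D_op adj (A_op adj h1) x + (A_op adj (D_op adj h2) x - D_op adj (A_op adj h2) x)"
      by (simp add: lin_ext[OF lin_D] lin_ext[OF lin_A] lin_add[OF lin_A] lin_add[OF lin_D])
    have e1: "D_op adj (\<lambda>y. c * h y) = (\<lambda>x. c * D_op adj h x)" by (rule ext, rule lin_scale[OF lin_D])
    have e2: "A_op adj (\<lambda>y. c * h y) = (\<lambda>x. c * A_op adj h x)" by (rule ext, rule lin_scale[OF lin_A])
    show "A_op adj (D_op adj (\<lambda>y. c * h y)) x - D_op adj (A_op adj (\<lambda>y. c * h y)) x =
       c * (A_op adj (D_op adj h) x - D_op adj (A_op adj h) x)"
      by (simp add: e1 e2 lin_scale[OF lin_A] lin_scale[OF lin_D] algebra_simps)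
  qed
  ultimately show ?thesis by simp
qed

fun Tm :: "('v \<Rightarrow> 'v \<Rightarrow> bool) \<Rightarrow> ('v \<Rightarrow> complex) \<Rightarrow> nat \<Rightarrow> 'v \<Rightarrow> complex" where
  "Tm adj g 0 = g"
| "Tm adj g (Suc 0) = A_op adj g"
| "Tm adj g (Suc (Suc m)) = (\<lambda>x. A_op adj (Tm adj g (Suc m)) x - Q_op adj (Tm adj g m) x)"

definition alp :: "nat \<Rightarrow> real" where
  "alp M = (real M + sqrt (real M ^ 2 + 4 * real M)) / 2"

lemma alp_sq: "(alp M)^2 = real M * alp M + real M"
proof -
  have s: "(sqrt (real M ^ 2 + 4 * real M))^2 = real M ^ 2 + 4 * real M" by simp
  show ?thesis unfolding alp_def power2_eq_square using s[unfolded power2_eq_square]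
    by (simp add: field_simps)
qed

lemma alp_ge: "real M \<le> alp M"
proof -
  have "real M \<le> sqrt (real M ^ 2 + 4 * real M)"
    by (rule real_le_rsqrt) simp
  then show ?thesis unfolding alp_def by simp
qed

lemma alg1: fixes a c s t z q :: complex
  shows "(a + z * c) + (c * z ^ 3 / q + s) - (- (c / 2)) * (inverse q * (- (2 * z))) - t - s
    = a - t + c * (z + z ^ 3 / q - z / q)"
  unfolding divide_inverse by (simp add: ring_distribs)

lemma summable_poly2: fixes t :: real assumes "0 \<le> t" "t < 1"
  shows "summable (\<lambda>k. real (k+1) ^ 2 * t ^ k)"
proof -
  have s1: "summable (\<lambda>n. diffs (\<lambda>_. 1::real) n * x ^ n)" if "norm x < 1" for x :: real
    by (rule termdiff_converges[where K=1]) (use that in \<open>auto intro: summable_geometric\<close>)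
  have s2: "summable (\<lambda>n. diffs (\<lambda>n. real (Suc n)) n * x ^ n)" if "norm x < 1" for x :: real
  proof (rule termdiff_converges[where K=1])
    fix y :: real assume "norm y < 1"
    then show "summable (\<lambda>n. real (Suc n) * y ^ n)" using s1[of y] by (simp add: diffs_def)
  qed (use that in auto)
  have "summable (\<lambda>n. real (Suc n) * real (Suc (Suc n)) * t ^ n)"
    using s2[of t] assms by (simp add: diffs_def mult.commute mult.left_commute)
  then show ?thesis
  proof (rule summable_comparison_test[rotated], intro exI allI impI)
    fix n :: nat
    have "real (n+1) ^ 2 * t ^ n \<le> real (Suc n) * real (Suc (Suc n)) * t ^ n"
      using assms by (intro mult_right_mono) (auto simp: power2_eq_square)
    then show "norm (real (n+1) ^ 2 * t ^ n) \<le> real (Suc n) * real (Suc (Suc n)) * t ^ n"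
      using assms by simp
  qed
qed

lemma ser_deriv:
  fixes a :: "nat \<Rightarrow> complex" and s :: nat
  assumes s: "0 < s" and ab: "\<And>k. norm (a k) \<le> C * real (k+1) ^ 2 * q ^ k"
    and q: "1 \<le> q" and zq: "cmod z * q < 1"
  shows "((\<lambda>w. \<Sum>k. a k / of_nat (k+s) * w ^ (k+s)) has_field_derivative (\<Sum>k. a k * z ^ (k+s-1))) (at z)"
proof -
  define r where "r = (cmod z + 1 / q) / 2"
  have ia: "cmod z < 1 / q" using zq q by (simp add: field_simps)
  have ia0: "0 < 1 / q" using q by simp
  have zr: "cmod z < r" using ia ia0 unfolding r_def by (simp add: field_simps)
  have r0: "0 < r" using ia ia0 unfolding r_def by (simp add: field_simps add_pos_nonneg)
  have "r < 1 / q" using ia unfolding r_def by (simp add: field_simps)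
  then have rq: "r * q < 1" using q by (simp add: field_simps)
  have C0: "0 \<le> C"
  proof -
    have "0 \<le> C * real (0+1) ^ 2 * q ^ 0" using ab[of 0] norm_ge_zero order_trans by blast
    then show ?thesis by simp
  qed
  show ?thesis
  proof (rule has_field_derivative_series'(2)[where S="ball 0 r"
      and f="\<lambda>k w. a k / of_nat (k+s) * w ^ (k+s)"
      and f'="\<lambda>k w. a k * w ^ (k+s-1)"])
    show "convex (ball (0::complex) r)" by simp
    fix n w assume w: "w \<in> ball (0::complex) r"
    have d: "((\<lambda>w. w ^ (n+s)) has_field_derivative of_nat (n+s) * (1 * w ^ (n+s - Suc 0))) (at w)"
      by (rule DERIV_power[OF DERIV_ident])
    have "((\<lambda>w. a n / of_nat (n+s) * w ^ (n+s)) has_field_derivative a n / of_nat (n+s) * (of_nat (n+s) * (1 * w ^ (n+s - Suc 0)))) (at w)"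
      by (rule DERIV_cmult[OF d])
    moreover have "a n / of_nat (n+s) * (of_nat (n+s) * (1 * w ^ (n+s - Suc 0))) = a n * w ^ (n+s-1)"
    proof -
      have "(of_nat (n+s) :: complex) \<noteq> 0" using s by (simp only: of_nat_eq_0_iff)
      then show ?thesis by simp
    qed
    ultimately show "((\<lambda>w. a n / of_nat (n+s) * w ^ (n+s)) has_field_derivative a n * w ^ (n+s-1)) (at w within ball 0 r)"
      by (simp add: has_field_derivative_at_within)
  next
    show "uniformly_convergent_on (ball 0 r) (\<lambda>n w. \<Sum>i<n. a i * w ^ (i+s-1))"
    proof (rule Weierstrass_m_test'[where M="\<lambda>k. (C * r ^ (s-1)) * (real (k+1) ^ 2 * (q * r) ^ k)"])
      fix n w assume w: "w \<in> ball (0::complex) r"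
      then have wr: "cmod w \<le> r" by simp
      have "norm (a n * w ^ (n+s-1)) = norm (a n) * cmod w ^ (n+s-1)" by (simp add: norm_mult norm_power)
      also have "\<dots> \<le> (C * real (n+1) ^ 2 * q ^ n) * r ^ (n+s-1)"
        by (intro mult_mono ab power_mono wr) (use C0 q in auto)
      also have "r ^ (n+s-1) = r ^ n * r ^ (s-1)" using s by (simp add: power_add[symmetric])
      finally show "norm (a n * w ^ (n+s-1)) \<le> (C * r ^ (s-1)) * (real (n+1) ^ 2 * (q * r) ^ n)"
        by (simp add: power_mult_distrib algebra_simps)
    next
      show "summable (\<lambda>k. (C * r ^ (s-1)) * (real (k+1) ^ 2 * (q * r) ^ k))"
        by (rule summable_mult, rule summable_poly2) (use q r0 rq in \<open>auto simp: mult.commute\<close>)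
    qed
  next
    show "0 \<in> ball (0::complex) r" using r0 by simp
    have "(\<lambda>k. a k / of_nat (k+s) * (0::complex) ^ (k+s)) = (\<lambda>k. 0)" using s by (simp add: fun_eq_iff)
    then show "summable (\<lambda>k. a k / of_nat (k+s) * (0::complex) ^ (k+s))" by simp
    show "z \<in> interior (ball 0 r)" using zr by simp
  qed
qed

locale gr =
  fixes adj :: "'v \<Rightarrow> 'v \<Rightarrow> bool" and M :: nat
  assumes sym: "adj x y \<Longrightarrow> adj y x"
    and fin: "finite (nbrs adj x)"
    and degM: "deg adj x \<le> M"
    and M1: "1 \<le> M"
begin

lemma geo_0: "geopaths adj 0 x = {[x]}"
  unfolding geopaths_def by (auto simp: length_Suc_conv)

lemma geo_Suc: "geopaths adj (Suc m) x =
   (\<Union>y\<in>nbrs adj x. (\<lambda>p. x # p) ` {p \<in> geopaths adj m y. 1 \<le> m \<longrightarrow> p ! 1 \<noteq> x})"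
proof (intro equalityI subsetI)
  fix p assume p: "p \<in> geopaths adj (Suc m) x"
  then obtain q where pq: "p = x # q" and lq: "length q = Suc m"
    unfolding geopaths_def by (cases p) auto
  have adjs: "\<forall>i<Suc m. adj (p ! i) (p ! Suc i)" and nb: "\<forall>i. Suc (Suc i) \<le> Suc m \<longrightarrow> p ! Suc (Suc i) \<noteq> p ! i"
    using p unfolding geopaths_def by auto
  have "adj x (q ! 0)" using adjs[rule_format, of 0] pq by simp
  moreover have "q \<in> geopaths adj m (q ! 0)"
    unfolding geopaths_def using lq adjs nb pq
    by (auto simp del: nth_Cons_Suc)
  moreover have "1 \<le> m \<longrightarrow> q ! 1 \<noteq> x" using nb[rule_format, of 0] pq by auto
  ultimately show "p \<in> (\<Union>y\<in>nbrs adj x. (\<lambda>p. x # p) ` {p \<in> geopaths adj m y. 1 \<le> m \<longrightarrow> p ! 1 \<noteq> x})"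
    using pq unfolding nbrs_def by blast
next
  fix p assume "p \<in> (\<Union>y\<in>nbrs adj x. (\<lambda>p. x # p) ` {p \<in> geopaths adj m y. 1 \<le> m \<longrightarrow> p ! 1 \<noteq> x})"
  then obtain y q where y: "adj x y" and pq: "p = x # q" and q: "q \<in> geopaths adj m y"
    and c: "1 \<le> m \<longrightarrow> q ! 1 \<noteq> x"
    unfolding nbrs_def by blast
  have lq: "length q = Suc m" and q0: "q ! 0 = y" and qa: "\<forall>i<m. adj (q ! i) (q ! Suc i)"
    and qn: "\<forall>i. Suc (Suc i) \<le> m \<longrightarrow> q ! Suc (Suc i) \<noteq> q ! i"
    using q unfolding geopaths_def by auto
  have "\<forall>i<Suc m. adj (p ! i) (p ! Suc i)"
  proof (intro allI impI)
    fix i assume "i < Suc m"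
    then show "adj (p ! i) (p ! Suc i)" using y q0 qa pq by (cases i) auto
  qed
  moreover have "\<forall>i. Suc (Suc i) \<le> Suc m \<longrightarrow> p ! Suc (Suc i) \<noteq> p ! i"
  proof (intro allI impI)
    fix i assume "Suc (Suc i) \<le> Suc m"
    then show "p ! Suc (Suc i) \<noteq> p ! i" using c qn pq q0 by (cases i) auto
  qed
  ultimately show "p \<in> geopaths adj (Suc m) x" unfolding geopaths_def using pq lq by auto
qed

lemma geo_finite: "finite (geopaths adj m x)"
proof (induction m arbitrary: x)
  case 0 then show ?case by (simp add: geo_0)
next
  case (Suc m) then show ?case by (simp add: geo_Suc fin)
qed

lemma geo_ne: "p \<in> geopaths adj m x \<Longrightarrow> p \<noteq> []"
  unfolding geopaths_def by auto

lemma geo_card: "card (geopaths adj m x) \<le> M ^ m"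
proof (induction m arbitrary: x)
  case 0 then show ?case by (simp add: geo_0)
next
  case (Suc m)
  have "card (geopaths adj (Suc m) x) \<le> (\<Sum>y\<in>nbrs adj x. card ((\<lambda>p. x # p) ` {p \<in> geopaths adj m y. 1 \<le> m \<longrightarrow> p ! 1 \<noteq> x}))"
    unfolding geo_Suc by (rule card_UN_le) (rule fin)
  also have "\<dots> \<le> (\<Sum>y\<in>nbrs adj x. M ^ m)"
  proof (rule sum_mono)
    fix y
    have "card ((\<lambda>p. x # p) ` {p \<in> geopaths adj m y. 1 \<le> m \<longrightarrow> p ! 1 \<noteq> x}) \<le> card {p \<in> geopaths adj m y. 1 \<le> m \<longrightarrow> p ! 1 \<noteq> x}"
      by (rule card_image_le) (simp add: geo_finite)
    also have "\<dots> \<le> card (geopaths adj m y)" by (rule card_mono) (auto simp: geo_finite)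
    finally show "card ((\<lambda>p. x # p) ` {p \<in> geopaths adj m y. 1 \<le> m \<longrightarrow> p ! 1 \<noteq> x}) \<le> M ^ m"
      using Suc.IH[of y] by linarith
  qed
  also have "\<dots> = deg adj x * M ^ m" by (simp add: deg_def)
  also have "\<dots> \<le> M * M ^ m" using degM by simp
  finally show ?case by simp
qed

lemma C_0: "C_op adj 0 g x = g x"
  by (simp add: C_op_def geo_0)

lemma C_Suc: "C_op adj (Suc m) g x =
   (\<Sum>y\<in>nbrs adj x. \<Sum>p\<in>{p \<in> geopaths adj m y. 1 \<le> m \<longrightarrow> p ! 1 \<noteq> x}. g (last p))"
proof -
  have "C_op adj (Suc m) g x = (\<Sum>y\<in>nbrs adj x. \<Sum>p\<in>(\<lambda>p. x # p) ` {p \<in> geopaths adj m y. 1 \<le> m \<longrightarrow> p ! 1 \<noteq> x}. g (last p))"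
    unfolding C_op_def geo_Suc
  proof (rule sum.UNION_disjoint)
    show "finite (nbrs adj x)" by (rule fin)
    show "\<forall>i\<in>nbrs adj x. finite ((\<lambda>p. x # p) ` {p \<in> geopaths adj m i. 1 \<le> m \<longrightarrow> p ! 1 \<noteq> x})"
      by (simp add: geo_finite)
    show "\<forall>i\<in>nbrs adj x. \<forall>j\<in>nbrs adj x. i \<noteq> j \<longrightarrow>
       (\<lambda>p. x # p) ` {p \<in> geopaths adj m i. 1 \<le> m \<longrightarrow> p ! 1 \<noteq> x} \<inter>
       (\<lambda>p. x # p) ` {p \<in> geopaths adj m j. 1 \<le> m \<longrightarrow> p ! 1 \<noteq> x} = {}"
      unfolding geopaths_def by auto
  qed
  also have "\<dots> = (\<Sum>y\<in>nbrs adj x. \<Sum>p\<in>{p \<in> geopaths adj m y. 1 \<le> m \<longrightarrow> p ! 1 \<noteq> x}. g (last p))"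
    apply (rule sum.cong, simp)
    apply (subst sum.reindex, simp)
    apply (rule sum.cong, simp)
    using geo_ne by auto
  finally show ?thesis .
qed

lemma C_1: "C_op adj 1 g x = A_op adj g x"
  using C_Suc[of 0 g x] by (simp add: geo_0 A_op_def)

lemma C_Suc0: "C_op adj (Suc 0) g = A_op adj g"
  using C_1 by (simp add: fun_eq_iff)

lemma filter_x:
  assumes "y \<in> nbrs adj x"
  shows "{p \<in> geopaths adj (Suc m) y. p ! 1 = x} = (\<lambda>q. y # q) ` {q \<in> geopaths adj m x. 1 \<le> m \<longrightarrow> q ! 1 \<noteq> y}"
proof -
  have xy: "x \<in> nbrs adj y" using assms sym unfolding nbrs_def by auto
  show ?thesis
    unfolding geo_Suc[of m y]
    using xy by (auto simp: geopaths_def)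
qed

lemma sum_split_filter:
  assumes "finite S"
  shows "(\<Sum>p\<in>S. h p) = (\<Sum>p\<in>{p\<in>S. P p}. h p) + (\<Sum>p\<in>{p\<in>S. \<not> P p}. h p)"
proof -
  have "S = {p\<in>S. P p} \<union> {p\<in>S. \<not> P p}" by auto
  then have "(\<Sum>p\<in>S. h p) = (\<Sum>p\<in>{p\<in>S. P p} \<union> {p\<in>S. \<not> P p}. h p)" by simp
  also have "\<dots> = (\<Sum>p\<in>{p\<in>S. P p}. h p) + (\<Sum>p\<in>{p\<in>S. \<not> P p}. h p)"
    by (rule sum.union_disjoint) (use assms in auto)
  finally show ?thesis .
qed

lemma C_rec_gen: "C_op adj (Suc (Suc m)) g x = A_op adj (C_op adj (Suc m) g) x
   - (\<Sum>q\<in>geopaths adj m x. g (last q) * of_nat (card {y\<in>nbrs adj x. 1 \<le> m \<longrightarrow> q ! 1 \<noteq> y}))"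
proof -
  have step: "(\<Sum>p\<in>{p \<in> geopaths adj (Suc m) y. 1 \<le> Suc m \<longrightarrow> p ! 1 \<noteq> x}. g (last p))
     = C_op adj (Suc m) g y - (\<Sum>q\<in>{q \<in> geopaths adj m x. 1 \<le> m \<longrightarrow> q ! 1 \<noteq> y}. g (last q))"
    if y: "y \<in> nbrs adj x" for y
  proof -
    have "C_op adj (Suc m) g y = (\<Sum>p\<in>{p \<in> geopaths adj (Suc m) y. p ! 1 = x}. g (last p))
       + (\<Sum>p\<in>{p \<in> geopaths adj (Suc m) y. \<not> p ! 1 = x}. g (last p))"
      unfolding C_op_def by (rule sum_split_filter) (rule geo_finite)
    also have "(\<Sum>p\<in>{p \<in> geopaths adj (Suc m) y. p ! 1 = x}. g (last p))
       = (\<Sum>q\<in>{q \<in> geopaths adj m x. 1 \<le> m \<longrightarrow> q ! 1 \<noteq> y}. g (last q))"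
      unfolding filter_x[OF y]
      apply (subst sum.reindex, simp)
      apply (rule sum.cong, simp)
      using geo_ne by auto
    finally show ?thesis by simp
  qed
  have "C_op adj (Suc (Suc m)) g x = (\<Sum>y\<in>nbrs adj x. C_op adj (Suc m) g y - (\<Sum>q\<in>{q \<in> geopaths adj m x. 1 \<le> m \<longrightarrow> q ! 1 \<noteq> y}. g (last q)))"
    unfolding C_Suc[of "Suc m"] using step by (intro sum.cong) auto
  also have "\<dots> = A_op adj (C_op adj (Suc m) g) x - (\<Sum>y\<in>nbrs adj x. \<Sum>q\<in>{q \<in> geopaths adj m x. 1 \<le> m \<longrightarrow> q ! 1 \<noteq> y}. g (last q))"
    by (simp add: sum_subtractf A_op_def)
  also have "(\<Sum>y\<in>nbrs adj x. \<Sum>q\<in>{q \<in> geopaths adj m x. 1 \<le> m \<longrightarrow> q ! 1 \<noteq> y}. g (last q))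
     = (\<Sum>y\<in>nbrs adj x. \<Sum>q\<in>geopaths adj m x. if 1 \<le> m \<longrightarrow> q ! 1 \<noteq> y then g (last q) else 0)"
    by (intro sum.cong refl sum.inter_filter geo_finite)
  also have "\<dots> = (\<Sum>q\<in>geopaths adj m x. \<Sum>y\<in>nbrs adj x. if 1 \<le> m \<longrightarrow> q ! 1 \<noteq> y then g (last q) else 0)"
    by (rule sum.swap)
  also have "\<dots> = (\<Sum>q\<in>geopaths adj m x. g (last q) * of_nat (card {y\<in>nbrs adj x. 1 \<le> m \<longrightarrow> q ! 1 \<noteq> y}))"
    by (intro sum.cong refl) (simp add: sum.inter_filter[symmetric] fin)
  finally show ?thesis .
qed

lemma C_2: "C_op adj 2 g x = A_op adj (C_op adj 1 g) x - of_nat (deg adj x) * g x"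
  using C_rec_gen[of 0 g x] by (simp add: geo_0 deg_def numeral_2_eq_2 mult.commute)

lemma C_rec: "1 \<le> m \<Longrightarrow> C_op adj (Suc (Suc m)) g x = A_op adj (C_op adj (Suc m) g) x
   - Q_op adj (C_op adj m g) x"
proof -
  assume m: "1 \<le> m"
  have "g (last q) * of_nat (card {y\<in>nbrs adj x. 1 \<le> m \<longrightarrow> q ! 1 \<noteq> y}) = g (last q) * (of_nat (deg adj x) - 1)"
    if q: "q \<in> geopaths adj m x" for q
  proof -
    have "adj (q ! 0) (q ! 1)" "q ! 0 = x" using q m unfolding geopaths_def by auto
    then have q1: "q ! 1 \<in> nbrs adj x" unfolding nbrs_def by auto
    have "{y\<in>nbrs adj x. 1 \<le> m \<longrightarrow> q ! 1 \<noteq> y} = nbrs adj x - {q ! 1}" using m by auto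
    then have "card {y\<in>nbrs adj x. 1 \<le> m \<longrightarrow> q ! 1 \<noteq> y} = deg adj x - 1"
      using q1 fin by (simp add: deg_def card_Diff_singleton)
    moreover have "deg adj x \<ge> 1" using q1 fin unfolding deg_def
      by (metis One_nat_def Suc_leI card_gt_0_iff empty_iff)
    ultimately show ?thesis by (simp add: of_nat_diff)
  qed
  then have "(\<Sum>q\<in>geopaths adj m x. g (last q) * of_nat (card {y\<in>nbrs adj x. 1 \<le> m \<longrightarrow> q ! 1 \<noteq> y}))
     = (\<Sum>q\<in>geopaths adj m x. g (last q) * (of_nat (deg adj x) - 1))"
    by (intro sum.cong) auto
  also have "\<dots> = (\<Sum>q\<in>geopaths adj m x. g (last q)) * (of_nat (deg adj x) - 1)"
    by (simp add: sum_distrib_right)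
  finally have e: "(\<Sum>q\<in>geopaths adj m x. g (last q) * of_nat (card {y\<in>nbrs adj x. 1 \<le> m \<longrightarrow> q ! 1 \<noteq> y}))
     = (\<Sum>q\<in>geopaths adj m x. g (last q)) * (of_nat (deg adj x) - 1)" .
  show ?thesis unfolding C_rec_gen[of m g x] e Q_op_def D_op_def C_op_def[of adj m g x]
    by (simp add: algebra_simps)
qed

lemma C_T: "C_op adj m g = (if m < 2 then Tm adj g m else (\<lambda>x. Tm adj g m x - Tm adj g (m - 2) x))"
proof (induction m rule: less_induct)
  case (less m)
  have "m = 0 \<or> m = 1 \<or> m = 2 \<or> m = 3 \<or> m = Suc (Suc (Suc (Suc (m - 4))))" by auto
  then consider "m = 0" | "m = 1" | "m = 2" | "m = 3" | k where "m = Suc (Suc (Suc (Suc k)))"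
    by blast
  then show ?case
  proof cases
    case 1 then show ?thesis by (auto simp: C_0)
  next
    case 2 then show ?thesis by (auto simp: C_Suc0)
  next
    case 3
    have "C_op adj 2 g x = Tm adj g 2 x - g x" for x
      using C_2[of g x] by (simp add: C_Suc0 Q_op_def D_op_def numeral_2_eq_2)
    then show ?thesis using 3 by auto
  next
    case 4
    have c2: "C_op adj (Suc (Suc 0)) g = (\<lambda>x. Tm adj g 2 x - g x)" using less[of 2] 4
      by (auto simp: numeral_2_eq_2)
    have "C_op adj (Suc (Suc 1)) g x = A_op adj (C_op adj 2 g) x - Q_op adj (C_op adj 1 g) x" for x
      using C_rec[of 1 g x] by (simp add: numeral_2_eq_2)
    then have "C_op adj 3 g x = A_op adj (Tm adj g 2) x - A_op adj g x - Q_op adj (A_op adj g) x" for x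
      by (simp add: c2 C_Suc0 lin_diff[OF lin_A] numeral_2_eq_2 numeral_3_eq_3)
    then show ?thesis using 4
      by (auto simp: numeral_2_eq_2 numeral_3_eq_3)
  next
    case 5
    have a: "C_op adj (Suc (Suc (Suc k))) g = (\<lambda>x. Tm adj g (Suc (Suc (Suc k))) x - Tm adj g (Suc k) x)"
      using less[of "Suc (Suc (Suc k))"] 5 by auto
    have b: "C_op adj (Suc (Suc k)) g = (\<lambda>x. Tm adj g (Suc (Suc k)) x - Tm adj g k x)"
      using less[of "Suc (Suc k)"] 5 by auto
    have "C_op adj m g x = Tm adj g m x - Tm adj g (m - 2) x" for x
      using C_rec[of "Suc (Suc k)" g x] 5
      by (simp add: a b lin_diff[OF lin_A] lin_diff[OF lin_Q])
    then show ?thesis using 5 by auto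
  qed
qed

lemma C_sum_T: "2 \<le> m \<Longrightarrow> (\<Sum>j=1..m div 2. C_op adj (m - 2*j) g y) = Tm adj g (m - 2) y"
proof (induction m rule: less_induct)
  case (less m)
  show ?case
  proof (cases "m < 4")
    case True
    then have "m = 2 \<or> m = 3" using less.prems by auto
    then show ?thesis by (auto simp: C_T)
  next
    case False
    have "(\<Sum>j=1..m div 2. C_op adj (m - 2*j) g y) = C_op adj (m - 2) g y + (\<Sum>j=Suc 1..m div 2. C_op adj (m - 2*j) g y)"
      using False by (subst sum.atLeast_Suc_atMost) auto
    also have "(\<Sum>j=Suc 1..m div 2. C_op adj (m - 2*j) g y) = (\<Sum>j=1..(m - 2) div 2. C_op adj (m - 2 - 2*j) g y)"
    proof -
      have "m div 2 = Suc ((m - 2) div 2)" using False by auto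
      then have "(\<Sum>j=Suc 1..m div 2. C_op adj (m - 2*j) g y) = (\<Sum>j=1..(m-2) div 2. C_op adj (m - 2*Suc j) g y)"
        by (simp only: sum.shift_bounds_cl_Suc_ivl)
      then show ?thesis by (simp add: algebra_simps)
    qed
    also have "\<dots> = Tm adj g (m - 2 - 2) y" using less.IH[of "m - 2"] False by auto
    finally show ?thesis using False by (auto simp: C_T)
  qed
qed

lemma B_T: "3 \<le> m \<Longrightarrow> B_op adj m g x = Tm adj g m x - Q_op adj (Tm adj g (m - 2)) x"
proof -
  assume m: "3 \<le> m"
  have "(\<lambda>y. \<Sum>j=1..m div 2. C_op adj (m - 2*j) g y) = Tm adj g (m - 2)"
    using C_sum_T m by auto
  then have "B_op adj m g x = C_op adj m g x - (Q_op adj (Tm adj g (m-2)) x - Tm adj g (m-2) x)"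
    using m unfolding B_op_def by (simp add: fun_eq_iff)
  then show ?thesis using m by (simp add: C_T)
qed

lemma B_1: "B_op adj 1 g x = Tm adj g 1 x"
  by (simp add: B_op_def C_Suc0)
lemma B_2: "B_op adj 2 g x = Tm adj g 2 x - g x"
  by (simp add: B_op_def C_T)

abbreviation "al \<equiv> alp M"

lemma al1: "1 \<le> al" using alp_ge[of M] M1 by simp
lemma Mal: "real M \<le> al" by (rule alp_ge)
lemma al_sq: "al * al = real M * al + real M" using alp_sq[of M] by (simp add: power2_eq_square)

lemma deg_le: "real (deg adj x) \<le> real M" using degM by simp

lemma norm_A: assumes "\<And>y. norm (h y) \<le> K" shows "norm (A_op adj h x) \<le> real M * K"
proof -
  have K: "0 \<le> K" using assms[of x] norm_ge_zero order_trans by blast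
  have "norm (A_op adj h x) \<le> (\<Sum>y\<in>nbrs adj x. norm (h y))" unfolding A_op_def by (rule norm_sum)
  also have "\<dots> \<le> (\<Sum>y\<in>nbrs adj x. K)" by (rule sum_mono) (rule assms)
  also have "\<dots> = real (deg adj x) * K" by (simp add: deg_def)
  also have "\<dots> \<le> real M * K" using deg_le K by (simp add: mult_right_mono)
  finally show ?thesis .
qed

lemma norm_degm1: "norm (of_nat (deg adj x) - (1::complex)) \<le> real M"
proof (cases "deg adj x = 0")
  case True then show ?thesis using M1 by simp
next
  case False
  then have "of_nat (deg adj x) - (1::complex) = of_nat (deg adj x - 1)" by (simp add: of_nat_diff)
  moreover have "real (deg adj x - 1) \<le> real M" using degM[of x] by simp
  ultimately show ?thesis by (simp only: norm_of_nat)
qed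

lemma norm_Q: assumes "\<And>y. norm (h y) \<le> K" shows "norm (Q_op adj h x) \<le> real M * K"
proof -
  have K: "0 \<le> K" using assms[of x] norm_ge_zero order_trans by blast
  have "Q_op adj h x = (of_nat (deg adj x) - 1) * h x" unfolding Q_op_def D_op_def by (simp add: algebra_simps)
  then have "norm (Q_op adj h x) = norm (of_nat (deg adj x) - (1::complex)) * norm (h x)" by (simp add: norm_mult)
  also have "\<dots> \<le> real M * K" by (rule mult_mono[OF norm_degm1 assms]) (use K in auto)
  finally show ?thesis .
qed

lemma norm_T: assumes g: "\<And>y. norm (g y) \<le> 1" shows "norm (Tm adj g m x) \<le> al ^ m"
proof (induction m arbitrary: x rule: less_induct)
  case (less m)
  have "m = 0 \<or> m = 1 \<or> m = Suc (Suc (m - 2))" by auto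
  then consider "m = 0" | "m = 1" | k where "m = Suc (Suc k)" by blast
  then show ?case
  proof cases
    case 1 then show ?thesis using g by simp
  next
    case 2 then show ?thesis using norm_A[of g 1 x] g Mal by simp
  next
    case 3
    have a: "norm (A_op adj (Tm adj g (Suc k)) x) \<le> real M * al ^ Suc k"
      by (rule norm_A) (rule less.IH, use 3 in auto)
    have b: "norm (Q_op adj (Tm adj g k) x) \<le> real M * al ^ k"
      by (rule norm_Q) (rule less.IH, use 3 in auto)
    have "norm (Tm adj g m x) \<le> real M * al ^ Suc k + real M * al ^ k"
      using 3 a b norm_triangle_ineq4[of "A_op adj (Tm adj g (Suc k)) x" "Q_op adj (Tm adj g k) x"] by simp
    also have "\<dots> = al ^ k * (real M * al + real M)" by (simp add: algebra_simps)
    also have "\<dots> = al ^ k * (al * al)" using al_sq by simp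
    also have "\<dots> = al ^ m" using 3 by (simp add: algebra_simps)
    finally show ?thesis .
  qed
qed

lemma norm_f: assumes "\<And>y. norm (h y) \<le> K"
  shows "norm (f_op adj z h x) \<le> (real M * cmod z + real M * cmod z ^ 2) * K"
proof -
  have "norm (f_op adj z h x) \<le> norm (A_op adj h x) * cmod z + norm (Q_op adj h x) * cmod z ^ 2"
    unfolding f_op_def using norm_triangle_ineq4[of "A_op adj h x * z" "Q_op adj h x * z\<^sup>2"]
    by (simp add: norm_mult norm_power)
  also have "\<dots> \<le> (real M * K) * cmod z + (real M * K) * cmod z ^ 2"
    by (intro add_mono mult_right_mono norm_A norm_Q assms) auto
  finally show ?thesis by (simp add: algebra_simps)
qed

lemma norm_fd: assumes "\<And>y. norm (h y) \<le> K"
  shows "norm (fd_op adj z h x) \<le> (real M + 2 * cmod z * real M) * K"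
proof -
  have "norm (fd_op adj z h x) \<le> norm (A_op adj h x) + 2 * cmod z * norm (Q_op adj h x)"
    unfolding fd_op_def using norm_triangle_ineq4[of "A_op adj h x" "2 * z * Q_op adj h x"]
    by (simp add: norm_mult)
  also have "\<dots> \<le> (real M * K) + 2 * cmod z * (real M * K)"
    by (intro add_mono mult_left_mono norm_A norm_Q assms) auto
  finally show ?thesis by (simp add: algebra_simps)
qed

lemma norm_fpow: assumes "\<And>y. norm (h y) \<le> K"
  shows "norm ((f_op adj z ^^ n) h x) \<le> (real M * cmod z + real M * cmod z ^ 2) ^ n * K"
proof (induction n arbitrary: x)
  case 0 then show ?case using assms by simp
next
  case (Suc n)
  have "norm (f_op adj z ((f_op adj z ^^ n) h) x) \<le> (real M * cmod z + real M * cmod z ^ 2) * ((real M * cmod z + real M * cmod z ^ 2) ^ n * K)"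
    by (rule norm_f) (rule Suc.IH)
  then show ?case by (simp add: algebra_simps)
qed

lemma norm_cl: "norm (c_loops adj k x) \<le> al ^ k"
proof -
  have "card {p\<in>geopaths adj k x. last p = x} \<le> card (geopaths adj k x)"
    by (rule card_mono) (auto simp: geo_finite)
  also have "\<dots> \<le> M ^ k" by (rule geo_card)
  finally have "real (card {p\<in>geopaths adj k x. last p = x}) \<le> real M ^ k"
    by (metis of_nat_le_iff of_nat_power)
  also have "\<dots> \<le> al ^ k" by (rule power_mono[OF Mal]) simp
  finally show ?thesis unfolding c_loops_def by (simp only: norm_of_nat)
qed

lemma norm_Delta_cl: "norm (Delta_op adj (c_loops adj k) x) \<le> 2 * real M * al ^ k"
proof -
  have "norm (Delta_op adj (c_loops adj k) x) \<le> norm (D_op adj (c_loops adj k) x) + norm (A_op adj (c_loops adj k) x)"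
    unfolding Delta_op_def by (rule norm_triangle_ineq4)
  also have "norm (D_op adj (c_loops adj k) x) \<le> real M * al ^ k"
    unfolding D_op_def norm_mult norm_of_nat
    by (intro mult_mono deg_le norm_cl) auto
  also have "norm (A_op adj (c_loops adj k) x) \<le> real M * al ^ k"
    by (rule norm_A) (rule norm_cl)
  finally show ?thesis by simp
qed

lemma norm_R: assumes g: "\<And>y. norm (g y) \<le> 1"
  shows "norm (R_op adj m g x) \<le> 2 * real M * real m ^ 2 * al ^ m"
proof (cases "m \<le> 2")
  case True then show ?thesis using al1 by (simp add: R_op_def)
next
  case False
  let ?n = "(m + 1) div 2 - 1"
  have "norm (\<Sum>j=1..?n. of_nat j * Delta_op adj (c_loops adj (m - 2*j)) x) \<le> (\<Sum>j=1..?n. norm (of_nat j * Delta_op adj (c_loops adj (m - 2*j)) x))"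
    by (rule norm_sum)
  also have "\<dots> \<le> (\<Sum>j=1..?n. real m * (2 * real M * al ^ m))"
  proof (rule sum_mono)
    fix j assume j: "j \<in> {1..?n}"
    have "norm (of_nat j * Delta_op adj (c_loops adj (m - 2*j)) x) = real j * norm (Delta_op adj (c_loops adj (m - 2*j)) x)"
      by (simp add: norm_mult)
    also have "\<dots> \<le> real m * (2 * real M * al ^ m)"
    proof (rule mult_mono)
      show "real j \<le> real m" using j by auto
      have "al ^ (m - 2*j) \<le> al ^ m" by (rule power_increasing) (use al1 in auto)
      then show "norm (Delta_op adj (c_loops adj (m - 2*j)) x) \<le> 2 * real M * al ^ m"
        using norm_Delta_cl[of "m - 2*j" x] mult_left_mono[of "al ^ (m - 2*j)" "al ^ m" "2 * real M"]
        by simp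
    qed (auto)
    finally show "norm (of_nat j * Delta_op adj (c_loops adj (m - 2*j)) x) \<le> real m * (2 * real M * al ^ m)" .
  qed
  also have "\<dots> = real ?n * (real m * (2 * real M * al ^ m))" by simp
  also have "\<dots> \<le> real m * (real m * (2 * real M * al ^ m))"
  proof (rule mult_right_mono)
    have "0 \<le> al ^ m" using al1 by simp
    then show "0 \<le> real m * (2 * real M * al ^ m)" by simp
  qed simp
  finally have s: "norm (\<Sum>j=1..?n. of_nat j * Delta_op adj (c_loops adj (m - 2*j)) x) \<le> real m * (real m * (2 * real M * al ^ m))" .
  have "norm (R_op adj m g x) = norm (\<Sum>j=1..?n. of_nat j * Delta_op adj (c_loops adj (m - 2*j)) x) * norm (g x)"
    using False by (simp add: R_op_def norm_mult)
  also have "\<dots> \<le> real m * (real m * (2 * real M * al ^ m)) * 1"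
  proof (rule mult_mono[OF s g])
    have "0 \<le> al ^ m" using al1 by simp
    then show "0 \<le> real m * (real m * (2 * real M * al ^ m))" by simp
  qed simp
  finally show ?thesis by (simp add: power2_eq_square algebra_simps)
qed

lemma norm_B: assumes g: "\<And>y. norm (g y) \<le> 1" and m: "1 \<le> m"
  shows "norm (B_op adj m g x) \<le> 2 * al ^ m"
proof -
  have "m = 1 \<or> m = 2 \<or> 3 \<le> m" using m by auto
  then consider "m = 1" | "m = 2" | "3 \<le> m" by blast
  then show ?thesis
  proof cases
    case 1
    have "norm (Tm adj g 1 x) \<le> al ^ 1" by (rule norm_T[OF g])
    then show ?thesis using 1 B_1[of g x] al1 by simp
  next
    case 2
    have "norm (B_op adj m g x) \<le> norm (Tm adj g 2 x) + norm (g x)"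
      using 2 B_2[of g x] norm_triangle_ineq4 by metis
    also have "\<dots> \<le> al ^ 2 + 1" by (intro add_mono norm_T g)
    also have "\<dots> \<le> 2 * al ^ m"
    proof -
      have "1 \<le> al ^ 2" using al1 by simp
      then show ?thesis using 2 by simp
    qed
    finally show ?thesis .
  next
    case 3
    have "norm (B_op adj m g x) \<le> norm (Tm adj g m x) + norm (Q_op adj (Tm adj g (m - 2)) x)"
      using 3 B_T[of m g x] norm_triangle_ineq4 by metis
    also have "\<dots> \<le> al ^ m + real M * al ^ (m - 2)"
      by (intro add_mono norm_T g norm_Q)
    also have "real M * al ^ (m - 2) \<le> (al * al) * al ^ (m - 2)"
    proof (rule mult_right_mono)
      have "al * 1 \<le> al * al" using al1 by (intro mult_left_mono) auto
      then show "real M \<le> al * al" using Mal by simp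
      show "0 \<le> al ^ (m - 2)" using al1 by simp
    qed
    also have "(al * al) * al ^ (m - 2) = al ^ m"
    proof -
      have "m = Suc (Suc (m - 2))" using 3 by auto
      then have "al ^ m = al ^ Suc (Suc (m - 2))" by simp
      then show ?thesis by simp
    qed
    finally show ?thesis by simp
  qed
qed

lemma f_fd_comm: "f_op adj z (fd_op adj z w) x = fd_op adj z (f_op adj z w) x - z\<^sup>2 * comm_AD adj w x"
  unfolding f_op_def fd_op_def comm_AD_def A_op_def Q_op_def D_op_def
  by (simp add: sum_subtractf sum.distrib sum_distrib_left sum_distrib_right algebra_simps power2_eq_square)

lemma pow_comm: "(f_op adj z ^^ i) (fd_op adj z h) x = fd_op adj z ((f_op adj z ^^ i) h) x
   - z\<^sup>2 * (\<Sum>l<i. (f_op adj z ^^ l) (comm_AD adj ((f_op adj z ^^ (i - 1 - l)) h)) x)"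
proof (induction i arbitrary: x)
  case 0 then show ?case by simp
next
  case (Suc i)
  let ?f = "f_op adj z"
  have e: "(?f ^^ i) (fd_op adj z h) = (\<lambda>y. fd_op adj z ((?f ^^ i) h) y
      - z\<^sup>2 * (\<Sum>l<i. (?f ^^ l) (comm_AD adj ((?f ^^ (i - 1 - l)) h)) y))"
    using Suc.IH by (simp add: fun_eq_iff)
  have "(?f ^^ Suc i) (fd_op adj z h) x = ?f ((?f ^^ i) (fd_op adj z h)) x" by simp
  also have "\<dots> = ?f (fd_op adj z ((?f ^^ i) h)) x
      - z\<^sup>2 * (\<Sum>l<i. ?f ((?f ^^ l) (comm_AD adj ((?f ^^ (i - 1 - l)) h))) x)"
    unfolding e by (simp add: lin_diff[OF lin_f] lin_scale[OF lin_f] lin_sum[OF lin_f])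
  also have "?f (fd_op adj z ((?f ^^ i) h)) x = fd_op adj z ((?f ^^ Suc i) h) x - z\<^sup>2 * comm_AD adj ((?f ^^ i) h) x"
    by (simp add: f_fd_comm)
  also have "(\<Sum>l<i. ?f ((?f ^^ l) (comm_AD adj ((?f ^^ (i - 1 - l)) h))) x)
      = (\<Sum>l<i. (?f ^^ Suc l) (comm_AD adj ((?f ^^ (Suc i - 1 - Suc l)) h)) x)"
    by simp
  finally show ?case by (simp only: sum.lessThan_Suc_shift) (simp add: algebra_simps)
qed

lemma dsum1: "(\<Sum>i<Suc k. \<Sum>l<i. (h l::complex)) = (\<Sum>l<k. of_nat (k - l) * h l)"
proof (induction k)
  case 0 then show ?case by simp
next
  case (Suc k)
  have "(\<Sum>l<Suc k. of_nat (Suc k - l) * h l) = (\<Sum>l<Suc k. of_nat (k - l) * h l + h l)"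
    by (intro sum.cong refl) (simp add: Suc_diff_le algebra_simps)
  also have "\<dots> = (\<Sum>l<Suc k. of_nat (k - l) * h l) + (\<Sum>l<Suc k. h l)" by (simp add: sum.distrib)
  also have "(\<Sum>l<Suc k. of_nat (k - l) * h l) = (\<Sum>l<k. of_nat (k - l) * h l)" by simp
  finally show ?case using Suc.IH by simp
qed

lemma dsum2: "(\<Sum>l<k. of_nat (k - l) * (h l::complex)) = (\<Sum>j=1..k. of_nat j * h (k - j))"
  by (rule sum.reindex_bij_witness[where i="\<lambda>j. k - j" and j="\<lambda>l. k - l"]) auto

lemma per_k: "(\<Sum>i<Suc k. (f_op adj z ^^ i) (fd_op adj z ((f_op adj z ^^ (k - i)) g)) x)
  = of_nat (Suc k) * fd_op adj z ((f_op adj z ^^ k) g) x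
    - z\<^sup>2 * (\<Sum>j=1..k. of_nat j * (f_op adj z ^^ (k - j)) (comm_AD adj ((f_op adj z ^^ (j - 1)) g)) x)"
proof -
  let ?f = "f_op adj z"
  let ?h = "\<lambda>l. (?f ^^ l) (comm_AD adj ((?f ^^ (k - 1 - l)) g)) x"
  have "(\<Sum>i<Suc k. (?f ^^ i) (fd_op adj z ((?f ^^ (k - i)) g)) x)
      = (\<Sum>i<Suc k. fd_op adj z ((?f ^^ k) g) x - z\<^sup>2 * (\<Sum>l<i. ?h l))"
  proof (intro sum.cong refl)
    fix i assume i: "i \<in> {..<Suc k}"
    have a: "(?f ^^ i) ((?f ^^ (k - i)) g) = (?f ^^ k) g"
      using i funpow_add[of i "k - i" ?f] by (simp add: fun_eq_iff)
    have b: "(?f ^^ (i - 1 - l)) ((?f ^^ (k - i)) g) = (?f ^^ (k - 1 - l)) g" if "l < i" for l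
    proof -
      have "i - 1 - l + (k - i) = k - 1 - l" using i that by auto
      then show ?thesis using funpow_add[of "i - 1 - l" "k - i" ?f] by (simp add: fun_eq_iff)
    qed
    show "(?f ^^ i) (fd_op adj z ((?f ^^ (k - i)) g)) x = fd_op adj z ((?f ^^ k) g) x - z\<^sup>2 * (\<Sum>l<i. ?h l)"
      unfolding pow_comm a using b by simp
  qed
  also have "\<dots> = of_nat (Suc k) * fd_op adj z ((?f ^^ k) g) x - z\<^sup>2 * (\<Sum>i<Suc k. \<Sum>l<i. ?h l)"
    by (simp only: sum_subtractf sum_distrib_left[symmetric] sum_constant card_lessThan)
  also have "(\<Sum>i<Suc k. \<Sum>l<i. ?h l) = (\<Sum>j=1..k. of_nat j * ?h (k - j))"
    by (simp only: dsum1 dsum2)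
  also have "\<dots> = (\<Sum>j=1..k. of_nat j * (?f ^^ (k - j)) (comm_AD adj ((?f ^^ (j - 1)) g)) x)"
    by (intro sum.cong refl) (auto simp: Suc_diff_le)
  finally show ?thesis .
qed

lemma deriv_f_step: assumes "\<And>y. ((\<lambda>z. H z y) has_field_derivative H' y) (at z0)"
  shows "((\<lambda>z. f_op adj z (H z) x) has_field_derivative (fd_op adj z0 (H z0) x + f_op adj z0 H' x)) (at z0)"
proof -
  have dA: "((\<lambda>z. A_op adj (H z) x) has_field_derivative A_op adj H' x) (at z0)"
    unfolding A_op_def by (rule DERIV_sum) (rule assms)
  have dQ: "((\<lambda>z. Q_op adj (H z) x) has_field_derivative Q_op adj H' x) (at z0)"
    unfolding Q_op_def D_op_def by (auto intro!: derivative_eq_intros assms)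
  note DERIV_diff[OF DERIV_mult[OF dA DERIV_ident] DERIV_mult[OF dQ DERIV_power[OF DERIV_ident, of 2]]]
  then show ?thesis unfolding f_op_def fd_op_def
    by (rule DERIV_cong) (simp add: algebra_simps power2_eq_square)
qed

lemma deriv_fpow: "((\<lambda>z. (f_op adj z ^^ n) g x) has_field_derivative
   (\<Sum>i<n. (f_op adj z0 ^^ i) (fd_op adj z0 ((f_op adj z0 ^^ (n - 1 - i)) g)) x)) (at z0)"
proof (induction n arbitrary: x)
  case 0 then show ?case by simp
next
  case (Suc n)
  let ?H' = "\<lambda>y. \<Sum>i<n. (f_op adj z0 ^^ i) (fd_op adj z0 ((f_op adj z0 ^^ (n - 1 - i)) g)) y"
  have "((\<lambda>z. f_op adj z ((f_op adj z ^^ n) g) x) has_field_derivative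
     (fd_op adj z0 ((f_op adj z0 ^^ n) g) x + f_op adj z0 ?H' x)) (at z0)"
    by (rule deriv_f_step) (rule Suc.IH)
  moreover have "fd_op adj z0 ((f_op adj z0 ^^ n) g) x + f_op adj z0 ?H' x
     = (\<Sum>i<Suc n. (f_op adj z0 ^^ i) (fd_op adj z0 ((f_op adj z0 ^^ (Suc n - 1 - i)) g)) x)"
    by (simp only: lin_sum[OF lin_f finite_lessThan] sum.lessThan_Suc_shift) simp
  ultimately show ?case by simp
qed

lemma sums_A: "(\<And>y. (\<lambda>n. h n y) sums H y) \<Longrightarrow> (\<lambda>n. A_op adj (h n) x) sums A_op adj H x"
  unfolding A_op_def by (rule sums_sum)

lemma sums_Q: "(\<And>y. (\<lambda>n. h n y) sums H y) \<Longrightarrow> (\<lambda>n. Q_op adj (h n) x) sums Q_op adj H x"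
  unfolding Q_op_def D_op_def by (intro sums_diff sums_mult)

lemma sums_f: "(\<And>y. (\<lambda>n. h n y) sums H y) \<Longrightarrow> (\<lambda>n. f_op adj z (h n) x) sums f_op adj z H x"
  unfolding f_op_def by (intro sums_diff sums_mult2 sums_A sums_Q)

lemma sums_fd: "(\<And>y. (\<lambda>n. h n y) sums H y) \<Longrightarrow> (\<lambda>n. fd_op adj z (h n) x) sums fd_op adj z H x"
  unfolding fd_op_def by (intro sums_diff sums_mult sums_A sums_Q)

abbreviation "rho z \<equiv> real M * cmod z + real M * cmod z ^ 2"

lemma rho_lt1: assumes "cmod z * al < 1" shows "rho z < 1"
proof -
  let ?t = "cmod z"
  have t0: "0 \<le> ?t" by simp
  have s1: "?t * al \<le> 1" using assms by simp
  have "al * al * rho z = real M * al * (?t * al) + real M * (?t * al) * (?t * al)"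
    by (simp add: algebra_simps power2_eq_square)
  also have "\<dots> \<le> real M * al * (?t * al) + real M * (?t * al) * 1"
    by (intro add_left_mono mult_left_mono s1) (use t0 al1 in auto)
  also have "\<dots> = (real M * al + real M) * (?t * al)" by (simp add: algebra_simps)
  also have "\<dots> = al * al * (?t * al)" using al_sq by simp
  also have "\<dots> < al * al * 1" using assms al1 by (intro mult_strict_left_mono) auto
  finally have "al * al * rho z < al * al * 1" .
  then show ?thesis using al1 by (smt (verit) mult_le_cancel_left1 mult_nonneg_nonneg)
qed

lemma rho_ge0: "0 \<le> rho z" by simp

lemma uniq: assumes K: "\<And>y. norm (W y) \<le> K" and fx: "\<And>y. W y = f_op adj z W y" and r: "rho z < 1"
  shows "W y = 0"
proof -
  have K0: "0 \<le> K" using K[of y] norm_ge_zero order_trans by blast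
  have b: "norm (W y) \<le> rho z ^ n * K" for n
  proof (induction n arbitrary: y)
    case 0 then show ?case using K by simp
  next
    case (Suc n)
    have "norm (f_op adj z W y) \<le> rho z * (rho z ^ n * K)" by (rule norm_f) (rule Suc.IH)
    then show ?case using fx[of y] by (simp add: algebra_simps)
  qed
  have "(\<lambda>n. rho z ^ n * K) \<longlonglongrightarrow> 0 * K"
    by (intro tendsto_mult LIMSEQ_power_zero tendsto_const) (use r in auto)
  then have "norm (W y) \<le> 0" using b by (intro LIMSEQ_le_const) auto
  then show ?thesis by simp
qed

lemma norm_suminf_bound: fixes a :: "nat \<Rightarrow> complex"
  assumes "\<And>n. norm (a n) \<le> b n" "summable b" shows "summable a" "norm (suminf a) \<le> suminf b"
proof -
  show sa: "summable a" by (rule summable_comparison_test[of _ b]) (use assms in auto)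
  have "summable (\<lambda>n. norm (a n))" by (rule summable_comparison_test[of _ b]) (use assms in auto)
  then have "norm (suminf a) \<le> (\<Sum>n. norm (a n))" by (rule summable_norm)
  also have "\<dots> \<le> suminf b" by (rule suminf_le) (use assms \<open>summable (\<lambda>n. norm (a n))\<close> in auto)
  finally show "norm (suminf a) \<le> suminf b" .
qed

definition PT :: "('v \<Rightarrow> complex) \<Rightarrow> complex \<Rightarrow> 'v \<Rightarrow> complex" where
  "PT g z x = (\<Sum>m. z ^ m * Tm adj g m x)"
definition PN :: "('v \<Rightarrow> complex) \<Rightarrow> complex \<Rightarrow> 'v \<Rightarrow> complex" where
  "PN g z x = (\<Sum>n. (f_op adj z ^^ n) g x)"

context
  fixes g :: "'v \<Rightarrow> complex" and z :: complex
  assumes g1: "\<And>y. norm (g y) \<le> 1" and zal: "cmod z * al < 1"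
begin

lemma T_term_bound: "norm (z ^ m * Tm adj g m x) \<le> (cmod z * al) ^ m"
proof -
  have "norm (z ^ m * Tm adj g m x) = cmod z ^ m * norm (Tm adj g m x)" by (simp add: norm_mult norm_power)
  also have "\<dots> \<le> cmod z ^ m * al ^ m" by (intro mult_left_mono norm_T g1) auto
  finally show ?thesis by (simp add: power_mult_distrib)
qed

lemma geo_sum: "summable (\<lambda>m. (cmod z * al) ^ m)"
  by (rule summable_geometric) (use zal al1 in auto)

lemma T_sums: "(\<lambda>m. z ^ m * Tm adj g m x) sums PT g z x"
  unfolding PT_def by (rule summable_sums, rule norm_suminf_bound(1)[OF T_term_bound geo_sum])

lemma PT_bound: "norm (PT g z x) \<le> (\<Sum>m. (cmod z * al) ^ m)"
  unfolding PT_def by (rule norm_suminf_bound(2)[OF T_term_bound geo_sum])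

lemma PT_fix: "PT g z x = g x + f_op adj z (PT g z) x"
proof -
  have sA: "(\<lambda>m. z ^ m * A_op adj (Tm adj g m) x) sums A_op adj (PT g z) x"
    using sums_A[of "\<lambda>m y. z ^ m * Tm adj g m y" "PT g z" x, OF T_sums]
    by (simp add: lin_scale[OF lin_A])
  have sQ: "(\<lambda>m. z ^ m * Q_op adj (Tm adj g m) x) sums Q_op adj (PT g z) x"
    using sums_Q[of "\<lambda>m y. z ^ m * Tm adj g m y" "PT g z" x, OF T_sums]
    by (simp add: lin_scale[OF lin_Q])
  have sA1: "(\<lambda>m. z ^ Suc m * A_op adj (Tm adj g (Suc m)) x) sums (A_op adj (PT g z) x - A_op adj g x)"
    using sA by (subst sums_Suc_iff) simp
  have "(\<lambda>m. z * (z ^ Suc m * A_op adj (Tm adj g (Suc m)) x) - z\<^sup>2 * (z ^ m * Q_op adj (Tm adj g m) x))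
     sums (z * (A_op adj (PT g z) x - A_op adj g x) - z\<^sup>2 * Q_op adj (PT g z) x)"
    by (intro sums_diff sums_mult sA1 sQ)
  moreover have "(\<lambda>m. z * (z ^ Suc m * A_op adj (Tm adj g (Suc m)) x) - z\<^sup>2 * (z ^ m * Q_op adj (Tm adj g m) x))
     = (\<lambda>m. z ^ Suc (Suc m) * Tm adj g (Suc (Suc m)) x)"
    by (simp add: fun_eq_iff algebra_simps power2_eq_square)
  ultimately have "(\<lambda>m. z ^ Suc (Suc m) * Tm adj g (Suc (Suc m)) x)
     sums (z * (A_op adj (PT g z) x - A_op adj g x) - z\<^sup>2 * Q_op adj (PT g z) x)" by simp
  then have "(\<lambda>m. z ^ Suc m * Tm adj g (Suc m) x)
     sums (z * (A_op adj (PT g z) x - A_op adj g x) - z\<^sup>2 * Q_op adj (PT g z) x + z ^ Suc 0 * Tm adj g (Suc 0) x)"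
    by (rule iffD1[OF sums_Suc_iff[of "\<lambda>m. z ^ Suc m * Tm adj g (Suc m) x"]])
  then have "(\<lambda>m. z ^ m * Tm adj g m x)
     sums (z * (A_op adj (PT g z) x - A_op adj g x) - z\<^sup>2 * Q_op adj (PT g z) x + z ^ Suc 0 * Tm adj g (Suc 0) x + z ^ 0 * Tm adj g 0 x)"
    by (rule iffD1[OF sums_Suc_iff[of "\<lambda>m. z ^ m * Tm adj g m x"]])
  then have "(\<lambda>m. z ^ m * Tm adj g m x)
     sums (z * (A_op adj (PT g z) x - A_op adj g x) - z\<^sup>2 * Q_op adj (PT g z) x + z * A_op adj g x + g x)"
    by simp
  then have "PT g z x = z * (A_op adj (PT g z) x - A_op adj g x) - z\<^sup>2 * Q_op adj (PT g z) x + z * A_op adj g x + g x"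
    using T_sums sums_unique2 by blast
  then show ?thesis by (simp add: f_op_def algebra_simps)
qed

lemma rho1: "rho z < 1" by (rule rho_lt1[OF zal])

lemma fpow_bound: "norm ((f_op adj z ^^ n) g x) \<le> rho z ^ n"
  using norm_fpow[where h=g and K=1 and z=z and n=n and x=x] g1 by simp

lemma rho_sum: "summable (\<lambda>n. rho z ^ n)"
  by (rule summable_geometric) (use rho1 in auto)

lemma PN_sums: "(\<lambda>n. (f_op adj z ^^ n) g x) sums PN g z x"
  unfolding PN_def by (rule summable_sums, rule norm_suminf_bound(1)[OF fpow_bound rho_sum])

lemma PN_bound: "norm (PN g z x) \<le> (\<Sum>n. rho z ^ n)"
  unfolding PN_def by (rule norm_suminf_bound(2)[OF fpow_bound rho_sum])

lemma PN_fix: "PN g z x = g x + f_op adj z (PN g z) x"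
proof -
  have "(\<lambda>n. f_op adj z ((f_op adj z ^^ n) g) x) sums f_op adj z (PN g z) x"
    by (rule sums_f) (rule PN_sums)
  then have "(\<lambda>n. (f_op adj z ^^ Suc n) g x) sums f_op adj z (PN g z) x" by simp
  then have "(\<lambda>n. (f_op adj z ^^ n) g x) sums (f_op adj z (PN g z) x + (f_op adj z ^^ 0) g x)"
    by (rule iffD1[OF sums_Suc_iff[of "\<lambda>n. (f_op adj z ^^ n) g x"]])
  then have "(\<lambda>n. (f_op adj z ^^ n) g x) sums (f_op adj z (PN g z) x + g x)" by simp
  then show ?thesis using PN_sums sums_unique2 by (metis add.commute)
qed

lemma PT_PN: "PT g z x = PN g z x"
proof -
  let ?W = "\<lambda>y. PT g z y - PN g z y"
  have "?W x = 0"
  proof (rule uniq[OF _ _ rho1])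
    fix y
    show "norm (?W y) \<le> (\<Sum>m. (cmod z * al) ^ m) + (\<Sum>n. rho z ^ n)"
      using norm_triangle_ineq4[of "PT g z y" "PN g z y"] PT_bound[of y] PN_bound[of y] by linarith
    show "?W y = f_op adj z ?W y"
      using PT_fix[of y] PN_fix[of y] by (simp add: lin_diff[OF lin_f])
  qed
  then show ?thesis by simp
qed

lemma B_sums: "(\<lambda>k. z ^ k * B_op adj (Suc k) g x) sums (fd_op adj z (PT g z) x + z * (Q_op adj g x - g x))"
proof -
  have sA: "(\<lambda>m. z ^ m * A_op adj (Tm adj g m) x) sums A_op adj (PT g z) x"
    using sums_A[of "\<lambda>m y. z ^ m * Tm adj g m y" "PT g z" x, OF T_sums]
    by (simp add: lin_scale[OF lin_A])
  have sQ: "(\<lambda>m. z ^ m * Q_op adj (Tm adj g m) x) sums Q_op adj (PT g z) x"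
    using sums_Q[of "\<lambda>m y. z ^ m * Tm adj g m y" "PT g z" x, OF T_sums]
    by (simp add: lin_scale[OF lin_Q])
  let ?d = "\<lambda>m. if m = 0 then 0 else z ^ m * Q_op adj (Tm adj g (m - 1)) x"
  have "(\<lambda>m. ?d (Suc m)) sums (z * Q_op adj (PT g z) x)"
    using sums_mult[OF sQ, of z] by (simp add: algebra_simps)
  then have sd: "?d sums (z * Q_op adj (PT g z) x)"
    using sums_Suc_iff[of ?d] by simp
  let ?c = "\<lambda>m. z ^ m * A_op adj (Tm adj g m) x - 2 * ?d m + (if m = 1 then z * (Q_op adj g x - g x) else 0)"
  have sc: "?c sums (A_op adj (PT g z) x - 2 * (z * Q_op adj (PT g z) x) + z * (Q_op adj g x - g x))"
    by (intro sums_add sums_diff sums_mult sA sd) (use sums_single[of 1 "\<lambda>_. z * (Q_op adj g x - g x)"] in simp)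
  have "?c k = z ^ k * B_op adj (Suc k) g x" for k
  proof -
    have "k = 0 \<or> k = 1 \<or> k = Suc (Suc (k - 2))" by auto
    then consider "k = 0" | "k = 1" | j where "k = Suc (Suc j)" by blast
    then show ?thesis
    proof cases
      case 1 then show ?thesis by (simp add: B_op_def C_Suc0)
    next
      case 2
      have "B_op adj 2 g x = Tm adj g 2 x - g x" by (rule B_2)
      then have "A_op adj (A_op adj g) x = g x + (Q_op adj g x + B_op adj (Suc (Suc 0)) g x)"
        by (simp add: numeral_2_eq_2)
      then show ?thesis using 2 by (simp add: algebra_simps)
    next
      case 3
      have "B_op adj (Suc k) g x = Tm adj g (Suc k) x - Q_op adj (Tm adj g (Suc k - 2)) x"
        by (rule B_T) (use 3 in simp)
      then have e: "A_op adj (Tm adj g (Suc (Suc j))) x = B_op adj (Suc k) g x + 2 * Q_op adj (Tm adj g (Suc j)) x"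
        using 3 by simp
      show ?thesis using 3 by (simp only: e) (simp add: algebra_simps)
    qed
  qed
  then have "?c = (\<lambda>k. z ^ k * B_op adj (Suc k) g x)" by (simp add: fun_eq_iff)
  then show ?thesis using sc by (simp add: fd_op_def algebra_simps)
qed

lemma fd_PN_sums: "(\<lambda>n. fd_op adj z ((f_op adj z ^^ n) g) x) sums fd_op adj z (PT g z) x"
proof -
  have "PT g z = PN g z" using PT_PN by (simp add: fun_eq_iff)
  then show ?thesis using sums_fd[of "\<lambda>n. (f_op adj z ^^ n) g" "PN g z", OF PN_sums] by simp
qed

end

lemma dterm_bound:
  assumes g1: "\<And>y. norm (g y) \<le> 1"
  shows "norm ((\<Sum>i<Suc n. (f_op adj w ^^ i) (fd_op adj w ((f_op adj w ^^ (n - i)) g)) x) / of_nat (Suc n))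
     \<le> (real M + 2 * cmod w * real M) * rho w ^ n"
proof -
  have t: "norm ((f_op adj w ^^ i) (fd_op adj w ((f_op adj w ^^ (n - i)) g)) x) \<le> (real M + 2 * cmod w * real M) * rho w ^ n"
    if i: "i < Suc n" for i
  proof -
    have "norm ((f_op adj w ^^ i) (fd_op adj w ((f_op adj w ^^ (n - i)) g)) x)
       \<le> rho w ^ i * ((real M + 2 * cmod w * real M) * (rho w ^ (n - i) * 1))"
    proof (rule norm_fpow)
      fix y show "norm (fd_op adj w ((f_op adj w ^^ (n - i)) g) y) \<le> (real M + 2 * cmod w * real M) * (rho w ^ (n - i) * 1)"
        by (rule norm_fd) (rule norm_fpow, rule g1)
    qed
    also have "\<dots> = (real M + 2 * cmod w * real M) * (rho w ^ i * rho w ^ (n - i))" by simp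
    also have "rho w ^ i * rho w ^ (n - i) = rho w ^ n" using i by (simp add: power_add[symmetric])
    finally show ?thesis .
  qed
  have "norm (\<Sum>i<Suc n. (f_op adj w ^^ i) (fd_op adj w ((f_op adj w ^^ (n - i)) g)) x)
      \<le> (\<Sum>i<Suc n. (real M + 2 * cmod w * real M) * rho w ^ n)"
    by (rule order_trans[OF norm_sum sum_mono]) (rule t, simp)
  also have "\<dots> = real (Suc n) * ((real M + 2 * cmod w * real M) * rho w ^ n)" by simp
  finally have S: "norm (\<Sum>i<Suc n. (f_op adj w ^^ i) (fd_op adj w ((f_op adj w ^^ (n - i)) g)) x)
      \<le> real (Suc n) * ((real M + 2 * cmod w * real M) * rho w ^ n)" .
  have "norm ((\<Sum>i<Suc n. (f_op adj w ^^ i) (fd_op adj w ((f_op adj w ^^ (n - i)) g)) x) / of_nat (Suc n))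
     = norm (\<Sum>i<Suc n. (f_op adj w ^^ i) (fd_op adj w ((f_op adj w ^^ (n - i)) g)) x) / real (Suc n)"
    by (simp only: norm_divide norm_of_nat)
  also have "\<dots> \<le> (real M + 2 * cmod w * real M) * rho w ^ n"
    using S by (simp only: pos_divide_le_eq[OF of_nat_0_less_iff[THEN iffD2, OF zero_less_Suc]] mult.commute)
  finally show ?thesis .
qed

lemma rho_mono: "cmod w \<le> r \<Longrightarrow> rho w \<le> real M * r + real M * r ^ 2"
  by (intro add_mono mult_left_mono power_mono) auto

lemma T2_deriv:
  assumes g1: "\<And>y. norm (g y) \<le> 1" and zal: "cmod z * al < 1"
  shows "((\<lambda>w. \<Sum>n. (f_op adj w ^^ Suc n) g x / of_nat (Suc n)) has_field_derivative
     (\<Sum>n. (\<Sum>i<Suc n. (f_op adj z ^^ i) (fd_op adj z ((f_op adj z ^^ (n - i)) g)) x) / of_nat (Suc n))) (at z)"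
proof -
  define r where "r = (cmod z + 1 / al) / 2"
  have zr: "cmod z < r" and ral: "r * al < 1" and r0: "0 < r"
  proof -
    have p: "0 \<le> cmod z * al" using al1 by simp
    have ia: "cmod z < 1 / al" using zal al1 by (simp add: field_simps)
    have ia0: "0 < 1 / al" using al1 by simp
    show "cmod z < r" using ia ia0 unfolding r_def by (simp add: field_simps)
    show "0 < r" using ia ia0 unfolding r_def by (simp add: field_simps add_pos_nonneg)
    have "r < 1 / al" using ia unfolding r_def by (simp add: field_simps)
    then show "r * al < 1" using al1 by (simp add: field_simps)
  qed
  let ?R = "real M * r + real M * r ^ 2"
  have R1': "rho (of_real r) < 1" by (rule rho_lt1) (use ral r0 in simp)
  have R1: "?R < 1" using R1' r0 by simp
  show ?thesis
  proof (rule has_field_derivative_series'(2)[where S="ball 0 r"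
      and f="\<lambda>n w. (f_op adj w ^^ Suc n) g x / of_nat (Suc n)"
      and f'="\<lambda>n w. (\<Sum>i<Suc n. (f_op adj w ^^ i) (fd_op adj w ((f_op adj w ^^ (n - i)) g)) x) / of_nat (Suc n)"])
    show "convex (ball (0::complex) r)" by simp
    fix n w assume w: "w \<in> ball (0::complex) r"
    show "((\<lambda>w. (f_op adj w ^^ Suc n) g x / of_nat (Suc n)) has_field_derivative
        (\<Sum>i<Suc n. (f_op adj w ^^ i) (fd_op adj w ((f_op adj w ^^ (n - i)) g)) x) / of_nat (Suc n)) (at w within ball 0 r)"
    proof -
      have d: "((\<lambda>w. (f_op adj w ^^ Suc n) g x) has_field_derivative
        (\<Sum>i<Suc n. (f_op adj w ^^ i) (fd_op adj w ((f_op adj w ^^ (n - i)) g)) x)) (at w)"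
        using deriv_fpow[of "Suc n" g x w] by (simp only: diff_Suc_1)
      show ?thesis by (rule has_field_derivative_at_within) (rule DERIV_cdivide[OF d])
    qed
  next
    show "uniformly_convergent_on (ball 0 r)
      (\<lambda>n w. \<Sum>i<n. (\<Sum>ia<Suc i. (f_op adj w ^^ ia) (fd_op adj w ((f_op adj w ^^ (i - ia)) g)) x) / of_nat (Suc i))"
    proof (rule Weierstrass_m_test'[where M="\<lambda>n. (real M + 2 * r * real M) * ?R ^ n"])
      fix n w assume w: "w \<in> ball (0::complex) r"
      then have wr: "cmod w \<le> r" by simp
      have "norm ((\<Sum>i<Suc n. (f_op adj w ^^ i) (fd_op adj w ((f_op adj w ^^ (n - i)) g)) x) / of_nat (Suc n))
         \<le> (real M + 2 * cmod w * real M) * rho w ^ n" by (rule dterm_bound[OF g1])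
      also have "\<dots> \<le> (real M + 2 * r * real M) * ?R ^ n"
      proof (rule mult_mono)
        show "real M + 2 * cmod w * real M \<le> real M + 2 * r * real M" using wr by (simp add: mult_right_mono)
        show "rho w ^ n \<le> ?R ^ n" by (rule power_mono[OF rho_mono[OF wr]]) simp
        show "0 \<le> real M + 2 * r * real M" using r0 by simp
      qed simp
      finally show "norm ((\<Sum>i<Suc n. (f_op adj w ^^ i) (fd_op adj w ((f_op adj w ^^ (n - i)) g)) x) / of_nat (Suc n))
         \<le> (real M + 2 * r * real M) * ?R ^ n" .
    next
      show "summable (\<lambda>n. (real M + 2 * r * real M) * ?R ^ n)"
      proof (rule summable_mult, rule summable_geometric)
        have "0 \<le> ?R" using r0 by simp
        then show "norm ?R < 1" using R1 by simp
      qed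
    qed
  next
    show "0 \<in> ball (0::complex) r" using r0 by simp
    have "(\<lambda>n. (f_op adj 0 ^^ Suc n) g x / of_nat (Suc n)) = (\<lambda>n. 0)"
      by (simp add: f_op_def fun_eq_iff)
    then show "summable (\<lambda>n. (f_op adj 0 ^^ Suc n) g x / of_nat (Suc n))" by simp
    show "z \<in> interior (ball 0 r)" using zr by simp
  qed
qed

lemma delta_le: "norm (delta x0 y) \<le> 1" by (simp add: delta_def)

lemma aR_bound: "norm (R_op adj (k+3) (delta x0) x) \<le> (18 * real M * al ^ 3) * real (k+1) ^ 2 * al ^ k"
proof -
  have "norm (R_op adj (k+3) (delta x0) x) \<le> 2 * real M * real (k+3) ^ 2 * al ^ (k+3)"
    by (rule norm_R) (rule delta_le)
  also have "\<dots> \<le> 2 * real M * (9 * real (k+1) ^ 2) * al ^ (k+3)"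
  proof -
    have "real (k+3) ^ 2 \<le> 9 * real (k+1) ^ 2" by (simp add: power2_eq_square algebra_simps)
    then show ?thesis using al1 by (intro mult_right_mono mult_left_mono) auto
  qed
  also have "\<dots> = (18 * real M * al ^ 3) * real (k+1) ^ 2 * al ^ k" by (simp add: power_add algebra_simps)
  finally show ?thesis .
qed

lemma aN_bound: "norm (N_op adj (Suc k) (delta x0) x) \<le> (2 * al + 2 * real M + 2 * real M * al) * real (k+1) ^ 2 * al ^ k"
proof -
  let ?g = "delta x0"
  have p1: "1 \<le> real (k+1) ^ 2" by simp
  have p2: "1 \<le> al ^ k" using al1 by simp
  have P: "1 \<le> real (k+1) ^ 2 * al ^ k" using p1 p2 by (metis mult_mono' mult_1 zero_le_one)
  have nB: "norm (B_op adj (Suc k) ?g x) \<le> 2 * al * (real (k+1) ^ 2 * al ^ k)"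
  proof -
    have "norm (B_op adj (Suc k) ?g x) \<le> 2 * al ^ Suc k" by (rule norm_B) (auto intro: delta_le)
    also have "\<dots> = 2 * al * al ^ k" by simp
    also have "\<dots> \<le> 2 * al * (real (k+1) ^ 2 * al ^ k)"
      using p1 al1 by (intro mult_left_mono) (auto intro: order_trans[OF _ mult_right_mono[of 1 _ "al ^ k", simplified]])
    finally show ?thesis .
  qed
  have nQ: "norm (Q_op adj ?g x - ?g x) \<le> 2 * real M * (real (k+1) ^ 2 * al ^ k)"
  proof -
    have "norm (Q_op adj ?g x - ?g x) \<le> norm (Q_op adj ?g x) + norm (?g x)" by (rule norm_triangle_ineq4)
    also have "\<dots> \<le> real M * 1 + 1" by (intro add_mono norm_Q delta_le)
    also have "\<dots> \<le> 2 * real M * 1" using M1 by simp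
    also have "\<dots> \<le> 2 * real M * (real (k+1) ^ 2 * al ^ k)" using P by (intro mult_left_mono) auto
    finally show ?thesis .
  qed
  have nR: "norm (R_op adj (Suc k) ?g x) \<le> 2 * real M * al * (real (k+1) ^ 2 * al ^ k)"
  proof -
    have "norm (R_op adj (Suc k) ?g x) \<le> 2 * real M * real (Suc k) ^ 2 * al ^ Suc k"
      by (rule norm_R) (rule delta_le)
    then show ?thesis by (simp add: algebra_simps)
  qed
  have "norm (N_op adj (Suc k) ?g x) \<le> norm (B_op adj (Suc k) ?g x) + norm (Q_op adj ?g x - ?g x) + norm (R_op adj (Suc k) ?g x)"
  proof -
    have r: "norm (Rplus_op adj (Suc k) ?g x) \<le> norm (Q_op adj ?g x - ?g x) + norm (R_op adj (Suc k) ?g x)"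
    proof (cases "Suc k \<le> 2")
      case True then show ?thesis by (simp add: Rplus_op_def)
    next
      case False
      have "norm ((if even (Suc k) then Q_op adj ?g x - ?g x else 0) + R_op adj (Suc k) ?g x)
        \<le> norm (if even (Suc k) then Q_op adj ?g x - ?g x else 0) + norm (R_op adj (Suc k) ?g x)"
        by (rule norm_triangle_ineq)
      also have "norm (if even (Suc k) then Q_op adj ?g x - ?g x else 0) \<le> norm (Q_op adj ?g x - ?g x)" by auto
      finally show ?thesis using False by (simp add: Rplus_op_def)
    qed
    have "norm (N_op adj (Suc k) ?g x) \<le> norm (B_op adj (Suc k) ?g x) + norm (Rplus_op adj (Suc k) ?g x)"
      unfolding N_op_def by (rule norm_triangle_ineq)
    then show ?thesis using r by linarith
  qed
  also have "\<dots> \<le> 2 * al * (real (k+1) ^ 2 * al ^ k) + 2 * real M * (real (k+1) ^ 2 * al ^ k) + 2 * real M * al * (real (k+1) ^ 2 * al ^ k)"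
    using nB nQ nR by linarith
  finally show ?thesis by (simp add: algebra_simps)
qed

lemma Hderiv_value:
  assumes zal: "cmod z * al < 1"
  shows "(\<Sum>k. N_op adj (Suc k) (delta x0) x * z ^ k)
     - (- (((of_nat (deg adj x0) - 2) / 2) * delta x0 x)) * (inverse (1 - z\<^sup>2) * (- (2 * z)))
     - (\<Sum>n. (\<Sum>i<Suc n. (f_op adj z ^^ i) (fd_op adj z ((f_op adj z ^^ (n - i)) (delta x0))) x) / of_nat (Suc n))
     - (\<Sum>k. R_op adj (k+3) (delta x0) x * z ^ (k+2))
   = z\<^sup>2 * (\<Sum>k. 1 / of_nat (Suc k) *
           (\<Sum>j=1..k. of_nat j *
              kernel (f_op adj z ^^ (k - j) \<circ> comm_AD adj \<circ> f_op adj z ^^ (j - 1)) x0 x))"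
proof -
  let ?g = "delta x0"
  let ?f = "f_op adj z"
  define c where "c = Q_op adj ?g x - ?g x"
  have c_eq: "c = (of_nat (deg adj x0) - 2) * delta x0 x"
    unfolding c_def Q_op_def D_op_def delta_def by auto
  have g1: "\<And>y. norm (?g y) \<le> 1" by (rule delta_le)
  have z1: "cmod z < 1"
  proof -
    have "cmod z * 1 \<le> cmod z * al" using al1 by (intro mult_left_mono) auto
    then show ?thesis using zal by simp
  qed
  have z21: "cmod (z\<^sup>2) < 1" using z1 by (simp add: norm_power power_less_one_iff abs_square_less_1)
  have nz: "1 - z\<^sup>2 \<noteq> 0" using z21 by auto
  have sR3: "summable (\<lambda>k. R_op adj (k+3) ?g x * z ^ (k+2))"
  proof (rule summable_comparison_test[rotated])
    show "summable (\<lambda>k. (18 * real M * al ^ 3 * cmod z ^ 2) * (real (k+1) ^ 2 * (al * cmod z) ^ k))"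
      by (rule summable_mult, rule summable_poly2) (use zal al1 in \<open>auto simp: mult.commute\<close>)
    show "\<exists>N. \<forall>n\<ge>N. norm (R_op adj (n+3) ?g x * z ^ (n+2)) \<le> (18 * real M * al ^ 3 * cmod z ^ 2) * (real (n+1) ^ 2 * (al * cmod z) ^ n)"
    proof (intro exI allI impI)
      fix n :: nat
      have "norm (R_op adj (n+3) ?g x * z ^ (n+2)) = norm (R_op adj (n+3) ?g x) * cmod z ^ (n+2)"
        by (simp add: norm_mult norm_power)
      also have "\<dots> \<le> ((18 * real M * al ^ 3) * real (n+1) ^ 2 * al ^ n) * cmod z ^ (n+2)"
        by (intro mult_right_mono aR_bound) auto
      also have "\<dots> = (18 * real M * al ^ 3 * cmod z ^ 2) * (real (n+1) ^ 2 * (al * cmod z) ^ n)"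
        by (simp add: power_add power_mult_distrib power2_eq_square algebra_simps)
      finally show "norm (R_op adj (n+3) ?g x * z ^ (n+2)) \<le> (18 * real M * al ^ 3 * cmod z ^ 2) * (real (n+1) ^ 2 * (al * cmod z) ^ n)" .
    qed
  qed
  define s4 where "s4 = (\<Sum>k. R_op adj (k+3) ?g x * z ^ (k+2))"
  have "(\<lambda>k. R_op adj (k+3) ?g x * z ^ (k+2)) sums s4" unfolding s4_def using sR3 by (rule summable_sums)
  then have "(\<lambda>k. R_op adj (Suc (Suc (Suc k))) ?g x * z ^ (Suc (Suc k))) sums s4"
    by (simp add: numeral_3_eq_3 numeral_2_eq_2)
  then have "(\<lambda>k. R_op adj (Suc (Suc k)) ?g x * z ^ (Suc k)) sums (s4 + R_op adj (Suc (Suc 0)) ?g x * z ^ (Suc 0))"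
    by (rule iffD1[OF sums_Suc_iff[of "\<lambda>k. R_op adj (Suc (Suc k)) ?g x * z ^ (Suc k)"]])
  then have "(\<lambda>k. R_op adj (Suc k) ?g x * z ^ k) sums (s4 + R_op adj (Suc (Suc 0)) ?g x * z ^ (Suc 0) + R_op adj (Suc 0) ?g x * z ^ 0)"
    by (rule iffD1[OF sums_Suc_iff[of "\<lambda>k. R_op adj (Suc k) ?g x * z ^ k"]])
  then have sR: "(\<lambda>k. R_op adj (Suc k) ?g x * z ^ k) sums s4" by (simp add: R_op_def)
  let ?E = "\<lambda>k. if 2 \<le> k \<and> odd k then c * z ^ k else 0"
  have sE: "?E sums (c * z ^ 3 / (1 - z\<^sup>2))"
  proof -
    have "(\<lambda>j. (z\<^sup>2) ^ j) sums (1 / (1 - z\<^sup>2))" using geometric_sums[OF z21] by simp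
    then have "(\<lambda>j. (c * z ^ 3) * (z\<^sup>2) ^ j) sums ((c * z ^ 3) * (1 / (1 - z\<^sup>2)))" by (rule sums_mult)
    moreover have "(\<lambda>j. (c * z ^ 3) * (z\<^sup>2) ^ j) = (\<lambda>j. ?E (2 * j + 3))"
      by (auto simp: fun_eq_iff power_mult[symmetric] power_add mult.commute)
    ultimately have "(\<lambda>j. ?E (2 * j + 3)) sums (c * z ^ 3 / (1 - z\<^sup>2))" by simp
    moreover have "strict_mono (\<lambda>j::nat. 2 * j + 3)" by (rule strict_monoI) simp
    moreover have "?E k = 0" if "k \<notin> range (\<lambda>j::nat. 2 * j + 3)" for k
    proof (rule ccontr)
      assume "?E k \<noteq> 0"
      then have k: "2 \<le> k" "odd k" by (auto split: if_splits)
      then have "k = 2 * ((k - 3) div 2) + 3" by presburger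
      then show False using that by blast
    qed
    ultimately show ?thesis using sums_mono_reindex[of "\<lambda>j. 2 * j + 3" ?E] by blast
  qed
  have Rp: "(\<lambda>k. Rplus_op adj (Suc k) ?g x * z ^ k) = (\<lambda>k. ?E k + R_op adj (Suc k) ?g x * z ^ k)"
  proof
    fix k
    show "Rplus_op adj (Suc k) ?g x * z ^ k = ?E k + R_op adj (Suc k) ?g x * z ^ k"
    proof (cases "Suc k \<le> 2")
      case True then show ?thesis by (simp add: Rplus_op_def R_op_def)
    next
      case False then show ?thesis by (auto simp: Rplus_op_def c_def algebra_simps)
    qed
  qed
  have sRp: "(\<lambda>k. Rplus_op adj (Suc k) ?g x * z ^ k) sums (c * z ^ 3 / (1 - z\<^sup>2) + s4)"
    unfolding Rp by (rule sums_add[OF sE sR])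
  have sN: "(\<lambda>k. N_op adj (Suc k) ?g x * z ^ k) sums ((fd_op adj z (PT ?g z) x + z * c) + (c * z ^ 3 / (1 - z\<^sup>2) + s4))"
  proof -
    have "(\<lambda>k. z ^ k * B_op adj (Suc k) ?g x + Rplus_op adj (Suc k) ?g x * z ^ k) sums
        ((fd_op adj z (PT ?g z) x + z * c) + (c * z ^ 3 / (1 - z\<^sup>2) + s4))"
    proof (rule sums_add[OF _ sRp])
      show "(\<lambda>k. z ^ k * B_op adj (Suc k) ?g x) sums (fd_op adj z (PT ?g z) x + z * c)"
        unfolding c_def by (rule B_sums[where g="?g" and z=z and x=x, OF g1 zal])
    qed
    then show ?thesis by (simp add: N_op_def algebra_simps)
  qed
  let ?D = "\<lambda>n. (\<Sum>i<Suc n. (?f ^^ i) (fd_op adj z ((?f ^^ (n - i)) ?g)) x) / of_nat (Suc n)"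
  let ?I = "\<lambda>n. 1 / of_nat (Suc n) * (\<Sum>j=1..n. of_nat j * (?f ^^ (n - j)) (comm_AD adj ((?f ^^ (j - 1)) ?g)) x)"
  have sD: "summable ?D"
  proof (rule summable_comparison_test[rotated])
    show "summable (\<lambda>n. (real M + 2 * cmod z * real M) * rho z ^ n)"
      by (rule summable_mult, rule summable_geometric) (use rho_lt1[OF zal] in simp)
    show "\<exists>N. \<forall>n\<ge>N. norm (?D n) \<le> (real M + 2 * cmod z * real M) * rho z ^ n"
      using dterm_bound[where g="?g", OF g1] by blast
  qed
  define t2 where "t2 = suminf ?D"
  have sD': "?D sums t2" unfolding t2_def using sD by (rule summable_sums)
  have Deq: "?D n = fd_op adj z ((?f ^^ n) ?g) x - z\<^sup>2 * ?I n" for n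
  proof -
    have "?D n = (of_nat (Suc n) * fd_op adj z ((?f ^^ n) ?g) x
      - z\<^sup>2 * (\<Sum>j=1..n. of_nat j * (?f ^^ (n - j)) (comm_AD adj ((?f ^^ (j - 1)) ?g)) x)) / of_nat (Suc n)"
      by (simp only: per_k)
    also have "\<dots> = fd_op adj z ((?f ^^ n) ?g) x - z\<^sup>2 * ?I n"
    proof -
      have "(of_nat (Suc n) :: complex) \<noteq> 0" by (simp only: of_nat_eq_0_iff)
      then show ?thesis by (simp add: field_simps)
    qed
    finally show ?thesis .
  qed
  have sI: "(\<lambda>n. z\<^sup>2 * ?I n) sums (fd_op adj z (PT ?g z) x - t2)"
  proof -
    have "(\<lambda>n. fd_op adj z ((?f ^^ n) ?g) x - ?D n) sums (fd_op adj z (PT ?g z) x - t2)"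
      by (rule sums_diff[OF fd_PN_sums[where g="?g" and z=z, OF g1 zal] sD'])
    moreover have "(\<lambda>n. fd_op adj z ((?f ^^ n) ?g) x - ?D n) = (\<lambda>n. z\<^sup>2 * ?I n)"
      by (rule ext) (simp only: Deq diff_diff_eq2 add_diff_cancel_left')
    ultimately show ?thesis by simp
  qed
  have Ival: "z\<^sup>2 * suminf ?I = fd_op adj z (PT ?g z) x - t2"
  proof (cases "z = 0")
    case True
    then have "(\<lambda>n. z\<^sup>2 * ?I n) = (\<lambda>n. 0)" by simp
    then have "fd_op adj z (PT ?g z) x - t2 = 0" using sI sums_unique2 sums_zero by metis
    then show ?thesis using True by simp
  next
    case False
    then have "(\<lambda>n. ?I n) sums ((fd_op adj z (PT ?g z) x - t2) / z\<^sup>2)"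
      using sums_divide[OF sI, of "z\<^sup>2"] by simp
    then show ?thesis using False by (simp add: sums_iff)
  qed
  have kern: "?I n = 1 / of_nat (Suc n) * (\<Sum>j=1..n. of_nat j *
              kernel (f_op adj z ^^ (n - j) \<circ> comm_AD adj \<circ> f_op adj z ^^ (j - 1)) x0 x)" for n
    by (simp add: kernel_def)
  have L: "(\<Sum>k. N_op adj (Suc k) ?g x * z ^ k) = (fd_op adj z (PT ?g z) x + z * c) + (c * z ^ 3 / (1 - z\<^sup>2) + s4)"
    using sN by (simp add: sums_iff)
  have "(\<Sum>k. N_op adj (Suc k) (delta x0) x * z ^ k)
     - (- (((of_nat (deg adj x0) - 2) / 2) * delta x0 x)) * (inverse (1 - z\<^sup>2) * (- (2 * z)))
     - t2 - s4 = fd_op adj z (PT ?g z) x - t2 + c * (z + z ^ 3 / (1 - z\<^sup>2) - z / (1 - z\<^sup>2))"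
  proof -
    have w: "- (((of_nat (deg adj x0) - 2) / 2) * delta x0 x) = - (c / 2)" by (simp add: c_eq)
    have nz2: "1 - z\<^sup>2 \<noteq> 0" by (rule nz)
    show ?thesis unfolding L w by (rule alg1)
  qed
  also have "z + z ^ 3 / (1 - z\<^sup>2) - z / (1 - z\<^sup>2) = 0"
    using nz by (simp add: field_simps power2_eq_square power3_eq_cube)
  finally have "(\<Sum>k. N_op adj (Suc k) (delta x0) x * z ^ k)
     - (- (((of_nat (deg adj x0) - 2) / 2) * delta x0 x)) * (inverse (1 - z\<^sup>2) * (- (2 * z)))
     - t2 - s4 = z\<^sup>2 * suminf ?I" using Ival by simp
  then show ?thesis unfolding t2_def s4_def kern by simp
qed

lemma main_eq:
  assumes u: "cmod u * al < 1"
  shows "exp (\<Sum>k. kernel (N_op adj (Suc k)) x0 x / of_nat (Suc k) * u ^ Suc k) =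
     (1 - u\<^sup>2) powr (- ((of_nat (deg adj x0) - 2) / 2) * delta x0 x)
   * exp (\<Sum>n. kernel (f_op adj u ^^ Suc n) x0 x / of_nat (Suc n))
   * exp (contour_integral (linepath 0 u)
        (\<lambda>z. z\<^sup>2 * (\<Sum>k. 1 / of_nat (Suc k) *
           (\<Sum>j=1..k. of_nat j *
              kernel (f_op adj z ^^ (k - j) \<circ> comm_AD adj \<circ> f_op adj z ^^ (j - 1)) x0 x))))
   * exp (\<Sum>k. kernel (R_op adj (k + 3)) x0 x / of_nat (k + 3) * u ^ (k + 3))"
proof -
  let ?g = "delta x0"
  define w0 where "w0 = - ((of_nat (deg adj x0) - 2) / 2) * delta x0 x"
  define Lz where "Lz = (\<lambda>w. \<Sum>k. N_op adj (Suc k) ?g x / of_nat (Suc k) * w ^ Suc k)"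
  define T1 where "T1 = (\<lambda>w. w0 * ln (1 - w\<^sup>2))"
  define T2 where "T2 = (\<lambda>w. \<Sum>n. (f_op adj w ^^ Suc n) ?g x / of_nat (Suc n))"
  define T4 where "T4 = (\<lambda>w. \<Sum>k. R_op adj (k + 3) ?g x / of_nat (k + 3) * w ^ (k + 3))"
  define H where "H = (\<lambda>w. Lz w - T1 w - T2 w - T4 w)"
  define ig where "ig = (\<lambda>z. z\<^sup>2 * (\<Sum>k. 1 / of_nat (Suc k) *
           (\<Sum>j=1..k. of_nat j *
              kernel (f_op adj z ^^ (k - j) \<circ> comm_AD adj \<circ> f_op adj z ^^ (j - 1)) x0 x)))"
  let ?S = "ball (0::complex) (1 / al)"
  have inS: "cmod z * al < 1" if "z \<in> ?S" for z
    using that al1 by (simp add: field_simps)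
  have dH: "(H has_field_derivative ig z) (at z within ?S)" if zS: "z \<in> ?S" for z
  proof -
    have zal: "cmod z * al < 1" by (rule inS[OF zS])
    have z1: "cmod z < 1"
    proof -
      have "cmod z * 1 \<le> cmod z * al" using al1 by (intro mult_left_mono) auto
      then show ?thesis using zal by simp
    qed
    have dL0: "((\<lambda>w. \<Sum>k. N_op adj (Suc k) ?g x / of_nat (k+1) * w ^ (k+1)) has_field_derivative
        (\<Sum>k. N_op adj (Suc k) ?g x * z ^ (k+1-1))) (at z)"
      by (rule ser_deriv[where C="2 * al + 2 * real M + 2 * real M * al" and q=al]) (use aN_bound al1 zal in auto)
    have dL: "(Lz has_field_derivative (\<Sum>k. N_op adj (Suc k) ?g x * z ^ k)) (at z)"
      using dL0 unfolding Lz_def by simp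
    have dR0: "((\<lambda>w. \<Sum>k. R_op adj (k+3) ?g x / of_nat (k+3) * w ^ (k+3)) has_field_derivative
        (\<Sum>k. R_op adj (k+3) ?g x * z ^ (k+3-1))) (at z)"
      by (rule ser_deriv[where C="18 * real M * al ^ 3" and q=al]) (use aR_bound al1 zal in auto)
    have e32: "(\<lambda>k. R_op adj (k+3) ?g x * z ^ (k+3-1)) = (\<lambda>k. R_op adj (k+3) ?g x * z ^ (k+2))"
      by (simp add: fun_eq_iff numeral_3_eq_3 numeral_2_eq_2)
    have dR: "(T4 has_field_derivative (\<Sum>k. R_op adj (k+3) ?g x * z ^ (k+2))) (at z)"
      using dR0 unfolding T4_def e32 .
    have nonpos: "1 - z\<^sup>2 \<notin> \<real>\<^sub>\<le>\<^sub>0"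
    proof -
      have "Re (z\<^sup>2) \<le> cmod (z\<^sup>2)" by (rule complex_Re_le_cmod)
      also have "\<dots> < 1" using z1 by (simp add: norm_power abs_square_less_1)
      finally show ?thesis by (simp add: complex_nonpos_Reals_iff)
    qed
    have dLn: "((\<lambda>w. ln (1 - w\<^sup>2)) has_field_derivative inverse (1 - z\<^sup>2) * (- (2 * z))) (at z)"
    proof (rule DERIV_chain2[where f=ln])
      show "(ln has_field_derivative inverse (1 - z\<^sup>2)) (at (1 - z\<^sup>2))"
        by (rule has_field_derivative_Ln[OF nonpos])
      show "((\<lambda>w. 1 - w\<^sup>2) has_field_derivative - (2 * z)) (at z)"
        by (auto intro!: derivative_eq_intros)
    qed
    have d1: "(T1 has_field_derivative w0 * (inverse (1 - z\<^sup>2) * (- (2 * z)))) (at z)"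
      unfolding T1_def by (rule DERIV_cmult[OF dLn])
    have d2: "(T2 has_field_derivative
       (\<Sum>n. (\<Sum>i<Suc n. (f_op adj z ^^ i) (fd_op adj z ((f_op adj z ^^ (n - i)) ?g)) x) / of_nat (Suc n))) (at z)"
      unfolding T2_def by (rule T2_deriv[OF delta_le zal])
    have "(H has_field_derivative
       (\<Sum>k. N_op adj (Suc k) ?g x * z ^ k) - w0 * (inverse (1 - z\<^sup>2) * (- (2 * z)))
       - (\<Sum>n. (\<Sum>i<Suc n. (f_op adj z ^^ i) (fd_op adj z ((f_op adj z ^^ (n - i)) ?g)) x) / of_nat (Suc n))
       - (\<Sum>k. R_op adj (k+3) ?g x * z ^ (k+2))) (at z)"
      unfolding H_def by (intro DERIV_diff dL d1 d2 dR)
    then have "(H has_field_derivative ig z) (at z)"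
      unfolding ig_def w0_def using Hderiv_value[OF zal, of x0 x] by simp
    then show ?thesis by (rule has_field_derivative_at_within)
  qed
  have u0: "u \<in> ?S" using u al1 by (simp add: field_simps)
  have seg: "path_image (linepath 0 u) \<subseteq> ?S"
  proof -
    have "closed_segment 0 u \<subseteq> ?S"
      by (rule closed_segment_subset) (use u0 al1 in auto)
    then show ?thesis by simp
  qed
  have "(ig has_contour_integral (H (pathfinish (linepath 0 u)) - H (pathstart (linepath 0 u)))) (linepath 0 u)"
    by (rule contour_integral_primitive[OF dH valid_path_linepath seg])
  then have ci: "contour_integral (linepath 0 u) ig = H u - H 0"
    by (simp add: contour_integral_unique)
  have H0: "H 0 = 0"
  proof -
    have "Lz 0 = 0" unfolding Lz_def by simp
    moreover have "T1 0 = 0" unfolding T1_def by simp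
    moreover have "T2 0 = 0" unfolding T2_def by (simp add: f_op_def)
    moreover have "T4 0 = 0" unfolding T4_def by (simp add: power_add)
    ultimately show ?thesis unfolding H_def by simp
  qed
  have nz: "1 - u\<^sup>2 \<noteq> 0"
  proof -
    have "cmod u * 1 \<le> cmod u * al" using al1 by (intro mult_left_mono) auto
    then have "cmod u < 1" using u by simp
    then have "cmod (u\<^sup>2) < 1" by (simp add: norm_power abs_square_less_1)
    then show ?thesis by auto
  qed
  have pw: "(1 - u\<^sup>2) powr w0 = exp (T1 u)" unfolding T1_def using nz by (simp add: powr_def)
  have ci2: "contour_integral (linepath 0 u) ig = H u" using ci H0 by simp
  have "Lz u = T1 u + T2 u + contour_integral (linepath 0 u) ig + T4 u"
    unfolding ci2 H_def by simp
  then have "exp (Lz u) = exp (T1 u) * exp (T2 u) * exp (contour_integral (linepath 0 u) ig) * exp (T4 u)"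
    by (simp add: exp_add)
  then show ?thesis
    unfolding pw[symmetric] w0_def Lz_def T2_def T4_def ig_def by (simp add: kernel_def)
qed

end

theorem theorem4p4:
  fixes adj :: "'v::countable \<Rightarrow> 'v \<Rightarrow> bool" and u :: complex and x0 x :: 'v
  assumes "simple_graph adj" and "connected_graph adj" and "bounded_degree adj"
    and "\<forall>y. deg adj y \<noteq> 1"
    and "cmod u < 1 / alpha adj"
  shows "Z_X adj u x0 x =
     (1 - u\<^sup>2) powr (- ((of_nat (deg adj x0) - 2) / 2) * delta x0 x)
   * exp (- log_I_minus_kernel
        (\<lambda>g y. (D_op adj g y - Delta_op adj g y) * u - (D_op adj g y - g y) * u\<^sup>2) x0 x)
   * exp (contour_integral (linepath 0 u)
        (\<lambda>z. z\<^sup>2 * (\<Sum>k. 1 / of_nat (Suc k) *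
           (\<Sum>j=1..k. of_nat j *
              kernel (f_op adj z ^^ (k - j) \<circ> comm_AD adj \<circ> f_op adj z ^^ (j - 1)) x0 x))))
   * exp (\<Sum>k. kernel (R_op adj (k + 3)) x0 x / of_nat (k + 3) * u ^ (k + 3))"
proof -
  let ?M = "max_deg adj"
  obtain K where K: "\<And>y. finite (nbrs adj y)" "\<And>y. deg adj y \<le> K"
    using assms(3) unfolding bounded_degree_def by blast
  have bdd: "bdd_above (range (deg adj))" using K(2) by (intro bdd_aboveI[where M=K]) auto
  have degM: "deg adj y \<le> ?M" for y unfolding max_deg_def by (rule cSUP_upper[OF _ bdd]) simp
  have al: "alpha adj = alp ?M" unfolding alpha_def alp_def Let_def by simp
  have M1: "1 \<le> ?M"
  proof (rule ccontr)
    assume "\<not> 1 \<le> ?M"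
    then have "?M = 0" by simp
    then have "alpha adj = 0" unfolding al alp_def by simp
    then show False using assms(5) by simp
  qed
  interpret gr adj ?M
  proof
    show "adj x y \<Longrightarrow> adj y x" for x y using assms(1) unfolding simple_graph_def by blast
  qed (use K degM M1 in auto)
  have alp1: "1 \<le> alp ?M" by (rule al1)
  have u: "cmod u * alp ?M < 1" using assms(5) alp1 unfolding al by (simp add: field_simps)
  have G: "(\<lambda>g y. (D_op adj g y - Delta_op adj g y) * u - (D_op adj g y - g y) * u\<^sup>2) = f_op adj u"
    by (simp add: fun_eq_iff f_op_def Delta_op_def Q_op_def)
  show ?thesis
    unfolding Z_X_def G log_I_minus_kernel_def minus_minus
    by (rule main_eq[OF u])
qed

end
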